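(* For every $q\ge2$, $\beta>0$ and every finite $d$-dimensional cube $V\subset\mathbb{Z}^d$, the Swendsen–Wang dynamics and the isolated vertices dynamics on the induced subgraph $G=(V,E)$ satisfy $\lambda(\boldsymbol{SW})\ge\lambda(\boldsymbol{I}_{\rm SW})$.
   Context: Potts measure with free boundary: $\pi(\sigma)\propto\exp(\beta\,\#\{(u,v)\in E:\sigma(u)=\sigma(v)\})$ on $\{1,\dots,q\}^V$; $p=1-e^{-\beta}$. Swendsen–Wang dynamics $\boldsymbol{SW}$: from $\sigma_t$, include each edge $(u,v)\in E$ with $\sigma_t(u)=\sigma_t(v)$ independently with probability $p$ to get $A_t\subseteq E$; assign each connected component of $(V,A_t)$ an independent uniform spin; discard edges. Isolated vertices dynamics $\boldsymbol{I}_{\rm SW}$: same first step, then assign an independent uniform spin only to each isolated vertex of $(V,A_t)$ (a vertex with no incident edge in $A_t$), leaving all other spins unchanged; discard edges. $\lambda(P)=1-\max\{|\lambda_2|,|\lambda_N|\}$ for a transition matrix reversible w.r.t. $\pi$ with eigenvalues $1=\lambda_1\ge\dots\ge\lambda_N$. *)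

theory Defs
  imports "Jordan_Normal_Form.Char_Poly" "HOL-Library.Multiset"
begin

text \<open>Vertices of Z^d are int lists of length d. The cube with lower corner a
  and side length L (L vertices per side).\<close>
definition cube :: "nat \<Rightarrow> (nat \<Rightarrow> int) \<Rightarrow> nat \<Rightarrow> int list set" where
  "cube d a L = {x. length x = d \<and> (\<forall>i<d. a i \<le> x ! i \<and> x ! i < a i + int L)}"

definition zd_adj :: "nat \<Rightarrow> int list \<Rightarrow> int list \<Rightarrow> bool" where
  "zd_adj d u v \<longleftrightarrow> (\<Sum>i<d. \<bar>u ! i - v ! i\<bar>) = 1"

definition induced_edges :: "nat \<Rightarrow> int list set \<Rightarrow> int list set set" where
  "induced_edges d V = {{u, v} | u v. u \<in> V \<and> v \<in> V \<and> zd_adj d u v}"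

definition configs :: "nat \<Rightarrow> 'v set \<Rightarrow> ('v \<Rightarrow> nat) set" where
  "configs q V = {\<sigma>. (\<forall>v\<in>V. \<sigma> v \<in> {1..q}) \<and> (\<forall>v. v \<notin> V \<longrightarrow> \<sigma> v = 0)}"

definition mono_edges :: "'v set set \<Rightarrow> ('v \<Rightarrow> nat) \<Rightarrow> 'v set set" where
  "mono_edges E \<sigma> = {e \<in> E. \<exists>u v. e = {u, v} \<and> \<sigma> u = \<sigma> v}"

definition perc_prob :: "real \<Rightarrow> 'v set set \<Rightarrow> 'v set set \<Rightarrow> real" where
  "perc_prob p F A = p ^ card A * (1 - p) ^ (card F - card A)"

definition edge_rel :: "'v set set \<Rightarrow> ('v \<times> 'v) set" where
  "edge_rel A = {(u, v). {u, v} \<in> A}"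

definition comp_rel :: "'v set \<Rightarrow> 'v set set \<Rightarrow> ('v \<times> 'v) set" where
  "comp_rel V A = {(u, v). u \<in> V \<and> v \<in> V \<and> (u, v) \<in> (edge_rel A)\<^sup>*}"

definition isolated :: "'v set \<Rightarrow> 'v set set \<Rightarrow> 'v \<Rightarrow> bool" where
  "isolated V A v \<longleftrightarrow> v \<in> V \<and> (\<forall>e\<in>A. v \<notin> e)"

definition SW_kernel :: "nat \<Rightarrow> real \<Rightarrow> 'v set \<Rightarrow> 'v set set \<Rightarrow> ('v \<Rightarrow> nat) \<Rightarrow> ('v \<Rightarrow> nat) \<Rightarrow> real" where
  "SW_kernel q p V E \<sigma> \<tau> =
     (\<Sum>A\<in>Pow (mono_edges E \<sigma>). perc_prob p (mono_edges E \<sigma>) A *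
        (if \<tau> \<in> configs q V \<and> (\<forall>(u, v)\<in>comp_rel V A. \<tau> u = \<tau> v)
         then 1 / real q ^ card (V // comp_rel V A) else 0))"

definition ISW_kernel :: "nat \<Rightarrow> real \<Rightarrow> 'v set \<Rightarrow> 'v set set \<Rightarrow> ('v \<Rightarrow> nat) \<Rightarrow> ('v \<Rightarrow> nat) \<Rightarrow> real" where
  "ISW_kernel q p V E \<sigma> \<tau> =
     (\<Sum>A\<in>Pow (mono_edges E \<sigma>). perc_prob p (mono_edges E \<sigma>) A *
        (if \<tau> \<in> configs q V \<and> (\<forall>v\<in>V. \<not> isolated V A v \<longrightarrow> \<tau> v = \<sigma> v)
         then 1 / real q ^ card {v \<in> V. isolated V A v} else 0))"

text \<open>Transition matrix of a kernel on a finite state space \<Omega>, w.r.t. an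
  (arbitrary) enumeration of \<Omega>; the spectrum does not depend on the choice.\<close>
definition state_enum :: "'s set \<Rightarrow> nat \<Rightarrow> 's" where
  "state_enum \<Omega> = (SOME f. bij_betw f {0..<card \<Omega>} \<Omega>)"

definition trans_mat :: "'s set \<Rightarrow> ('s \<Rightarrow> 's \<Rightarrow> real) \<Rightarrow> real mat" where
  "trans_mat \<Omega> P = mat (card \<Omega>) (card \<Omega>)
     (\<lambda>(i, j). P (state_enum \<Omega> i) (state_enum \<Omega> j))"

text \<open>Eigenvalues with multiplicity in non-increasing order
  1 = lambda_1 \<ge> ... \<ge> lambda_N (real spectrum of a reversible matrix).\<close>
definition eigs_desc :: "real mat \<Rightarrow> real list" where
  "eigs_desc M = rev (sorted_list_of_multiset (proots (char_poly M)))"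

definition spectral_gap :: "real mat \<Rightarrow> real" where
  "spectral_gap M = 1 - max \<bar>eigs_desc M ! 1\<bar> \<bar>last (eigs_desc M)\<bar>"

end

theory Submission
  imports Defs "HOL-Combinatorics.Permutations"
begin


definition mv :: "nat \<Rightarrow> (nat \<Rightarrow> nat \<Rightarrow> real) \<Rightarrow> (nat \<Rightarrow> real) \<Rightarrow> nat \<Rightarrow> real" where
  "mv n A x = (\<lambda>i. \<Sum>j<n. A i j * x j)"

definition symm :: "nat \<Rightarrow> (nat \<Rightarrow> nat \<Rightarrow> real) \<Rightarrow> bool" where
  "symm n S \<longleftrightarrow> (\<forall>i<n. \<forall>j<n. S i j = S j i)"

lemma real_eigvec:
  assumes n: "n > 0" and sy: "symm n S"
  shows "\<exists>lam v. (\<Sum>i<n. v i * v i) = 1 \<and> (\<forall>i<n. mv n S v i = lam * v i)"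
proof -
  define A where "A = mat n n (\<lambda>(i,j). complex_of_real (S i j))"
  have A: "A \<in> carrier_mat n n" by (simp add: A_def)
  obtain as where cp: "char_poly A = (\<Prod> a\<leftarrow>as. [:-a,1:])" and len: "length as = n"
    using char_poly_factorized[OF A] by blast
  then obtain c where c: "c \<in> set as" using n by (cases as) auto
  hence "poly (char_poly A) c = 0" unfolding cp
    by (simp add: poly_prod_list prod_list_zero_iff)
  hence "eigenvalue A c" using eigenvalue_root_char_poly[OF A] by simp
  then obtain w where ev: "eigenvector A w c" unfolding eigenvalue_def by blast
  hence w: "w \<in> carrier_vec n" "w \<noteq> 0\<^sub>v n" "A *\<^sub>v w = c \<cdot>\<^sub>v w" using A unfolding eigenvector_def by auto
  have eq: "(\<Sum>j<n. complex_of_real (S i j) * w $ j) = c * w $ i" if i: "i < n" for i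
  proof -
    have "(A *\<^sub>v w) $ i = c * w $ i" using w i by simp
    moreover have "(A *\<^sub>v w) $ i = (\<Sum>j<n. complex_of_real (S i j) * w $ j)"
      using i w(1) unfolding A_def by (auto simp: scalar_prod_def row_def lessThan_atLeast0 intro!: sum.cong)
    ultimately show ?thesis by simp
  qed
  define N where "N = (\<Sum>i<n. (cmod (w $ i))\<^sup>2)"
  obtain i0 where i0: "i0 < n" "w $ i0 \<noteq> 0" using w(1,2) by (metis eq_vecI carrier_vecD index_zero_vec(1,2))
  have Npos: "N > 0" unfolding N_def
    by (rule sum_pos2[of _ i0]) (use i0 in auto)
  define z where "z = (\<Sum>i<n. cnj (w $ i) * (\<Sum>j<n. complex_of_real (S i j) * w $ j))"
  have z1: "z = c * complex_of_real N"
  proof -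
    have "z = (\<Sum>i<n. c * (cnj (w $ i) * w $ i))" unfolding z_def
      by (rule sum.cong) (auto simp: eq)
    also have "\<dots> = c * complex_of_real N" unfolding N_def
      by (simp add: sum_distrib_left complex_norm_square[symmetric] mult.commute)
    finally show ?thesis .
  qed
  have z2: "cnj z = z"
  proof -
    have "cnj z = (\<Sum>i<n. \<Sum>j<n. w $ i * (complex_of_real (S i j) * cnj (w $ j)))"
      unfolding z_def by (simp add: sum_distrib_left)
    also have "\<dots> = (\<Sum>j<n. \<Sum>i<n. w $ i * (complex_of_real (S i j) * cnj (w $ j)))"
      by (rule sum.swap)
    also have "\<dots> = z" unfolding z_def sum_distrib_left
      using sy unfolding symm_def
      by (intro sum.cong refl) (auto simp: algebra_simps)
    finally show ?thesis .
  qed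
  have "Im c = 0"
  proof -
    have "Im z = 0" using z2 by (metis cnj.simps(2) neg_equal_zero)
    thus ?thesis using z1 Npos by simp
  qed
  define lam where "lam = Re c"
  have ceq: "c = complex_of_real lam" using \<open>Im c = 0\<close> unfolding lam_def by (simp add: complex_eq_iff)
  define x where "x = (\<lambda>i. Re (w $ i))"
  define y where "y = (\<lambda>i. Im (w $ i))"
  have ex: "mv n S x i = lam * x i" if "i < n" for i
  proof -
    have "Re (\<Sum>j<n. complex_of_real (S i j) * w $ j) = Re (c * w $ i)" using eq[OF that] by simp
    thus ?thesis unfolding mv_def x_def ceq by (simp add: Re_sum)
  qed
  have ey: "mv n S y i = lam * y i" if "i < n" for i
  proof -
    have "Im (\<Sum>j<n. complex_of_real (S i j) * w $ j) = Im (c * w $ i)" using eq[OF that] by simp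
    thus ?thesis unfolding mv_def y_def ceq by (simp add: Im_sum)
  qed
  obtain v where v0: "v i0 \<noteq> 0" and ev: "\<forall>i<n. mv n S v i = lam * v i"
  proof (cases "x i0 = 0")
    case True
    hence "y i0 \<noteq> 0" using i0 unfolding x_def y_def by (simp add: complex_eq_iff)
    thus ?thesis using that ey by blast
  next
    case False thus ?thesis using that ex by blast
  qed
  define s where "s = (\<Sum>i<n. v i * v i)"
  have spos: "s > 0" unfolding s_def by (rule sum_pos2[of _ i0]) (use i0 v0 in \<open>auto simp: zero_less_mult_iff\<close>)
  define v' where "v' = (\<lambda>i. v i / sqrt s)"
  have "(\<Sum>i<n. v' i * v' i) = 1" unfolding v'_def using spos
    by (simp add: sum_divide_distrib[symmetric] s_def)
  moreover have "\<forall>i<n. mv n S v' i = lam * v' i"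
    using ev unfolding mv_def v'_def by (simp add: sum_divide_distrib[symmetric])
  ultimately show ?thesis by blast
qed

definition orthon :: "nat \<Rightarrow> (nat \<Rightarrow> nat \<Rightarrow> real) \<Rightarrow> bool" where
  "orthon n u \<longleftrightarrow> (\<forall>k<n. \<forall>l<n. (\<Sum>i<n. u k i * u l i) = (if k = l then 1 else 0))"

definition eigp :: "nat \<Rightarrow> (nat \<Rightarrow> nat \<Rightarrow> real) \<Rightarrow> (nat \<Rightarrow> real) \<Rightarrow> (nat \<Rightarrow> nat \<Rightarrow> real) \<Rightarrow> bool" where
  "eigp n S e u \<longleftrightarrow> (\<forall>k<n. \<forall>i<n. mv n S (u k) i = e k * u k i)"

lemma mv_cong: "(\<And>a. a < m \<Longrightarrow> f a = g a) \<Longrightarrow> mv m A f = mv m A g"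
  unfolding mv_def by (auto intro!: ext sum.cong)

lemma delta_prod_sum:
  "(\<Sum>k<(m::nat). (if i = k then 1 else 0) * (if k = j then 1 else (0::real))) = (if i = j \<and> i < m then 1 else 0)"
proof -
  have "(\<lambda>k. (if i = k then 1 else 0) * (if k = j then 1 else (0::real))) = (\<lambda>k. if k = i then (if i = j then 1 else 0) else 0)"
    by auto
  hence "(\<Sum>k<m. (if i = k then 1 else 0) * (if k = j then 1 else (0::real))) = (\<Sum>k<m. if k = i then (if i = j then 1 else 0) else 0)"
    by metis
  also have "\<dots> = (if i = j \<and> i < m then 1 else 0)" by (simp add: sum.delta)
  finally show ?thesis .
qed

lemma householder:
  assumes v1: "(\<Sum>i<Suc n. v i * v i) = 1"
  shows "\<exists>H. symm (Suc n) H \<and> (\<forall>i<Suc n. \<forall>j<Suc n. (\<Sum>k<Suc n. H i k * H k j) = (if i = j then 1 else 0))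
           \<and> (\<forall>i<Suc n. H i n = v i)"
proof -
  define u where "u = (\<lambda>i. v i - (if i = n then 1 else 0))"
  define s where "s = (\<Sum>i<Suc n. u i * u i)"
  show ?thesis
  proof (cases "s = 0")
    case True
    have "\<forall>i\<in>{..<Suc n}. u i * u i = 0"
      using True unfolding s_def by (subst sum_nonneg_eq_0_iff[symmetric]) auto
    hence u0: "\<And>i. i < Suc n \<Longrightarrow> v i = (if i = n then 1 else 0)" unfolding u_def by auto
    show ?thesis
      by (rule exI[of _ "\<lambda>i j. if i = j then 1 else 0"])
         (auto simp: symm_def u0 delta_prod_sum)
  next
    case False
    have s2: "s = 2 - 2 * v n"
    proof -
      have "\<And>i. u i * u i = v i * v i - 2 * (if i = n then v i else 0) + (if i = n then 1 else 0)"
        unfolding u_def by (auto simp: algebra_simps)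
      hence "s = (\<Sum>i<Suc n. v i * v i) - 2 * (\<Sum>i<Suc n. (if i = n then v i else 0)) + (\<Sum>i<Suc n. (if i = n then 1 else 0))"
        unfolding s_def by (simp add: sum.distrib sum_subtractf sum_distrib_left)
      thus ?thesis using v1 by simp
    qed
    define c where "c = 2 / s"
    have cun: "c * u n = -1" unfolding c_def u_def using False s2 by (simp add: field_simps)
    have cs: "c * c * s = 2 * c" unfolding c_def using False by (simp add: field_simps)
    define H where "H = (\<lambda>i j. (if i = j then 1 else 0) - c * u i * u j)"
    have "symm (Suc n) H" unfolding symm_def H_def by auto
    moreover have "\<forall>i<Suc n. \<forall>j<Suc n. (\<Sum>k<Suc n. H i k * H k j) = (if i = j then 1 else 0)"
    proof (intro allI impI)
      fix i j assume i: "i < Suc n" and j: "j < Suc n"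
      have "\<And>k. H i k * H k j = (if i = k then 1 else 0) * (if k = j then 1 else 0)
           - c * u j * (if i = k then u k else 0) - c * u i * (if k = j then u k else 0)
           + c * c * u i * u j * (u k * u k)"
        unfolding H_def by (auto simp: algebra_simps)
      hence "(\<Sum>k<Suc n. H i k * H k j) = (\<Sum>k<Suc n. (if i = k then 1 else 0) * (if k = j then 1 else 0)
           - c * u j * (if i = k then u k else 0) - c * u i * (if k = j then u k else 0)
           + c * c * u i * u j * (u k * u k))" by presburger
      also have "\<dots> = (\<Sum>k<Suc n. (if i = k then 1 else 0) * (if k = j then 1 else 0))
           - c * u j * (\<Sum>k<Suc n. if i = k then u k else 0) - c * u i * (\<Sum>k<Suc n. if k = j then u k else 0)
           + c * c * u i * u j * s"
        unfolding s_def by (simp only: sum.distrib sum_subtractf flip: sum_distrib_left)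
      also have "\<dots> = (if i = j then 1 else 0) - 2 * c * u i * u j + c * c * s * u i * u j"
        using i j by (simp only: delta_prod_sum sum.delta sum.delta' finite_lessThan lessThan_iff if_True) (simp add: algebra_simps)
      also have "\<dots> = (if i = j then 1 else 0)" using cs by simp
      finally show "(\<Sum>k<Suc n. H i k * H k j) = (if i = j then 1 else 0)" .
    qed
    moreover have "\<forall>i<Suc n. H i n = v i"
    proof (intro allI impI)
      fix i assume "i < Suc n"
      have "H i n = (if i = n then 1 else 0) - (c * u n) * u i" unfolding H_def by (simp add: algebra_simps)
      also have "\<dots> = v i" using cun unfolding u_def by simp
      finally show "H i n = v i" .
    qed
    ultimately show ?thesis by blast
  qed
qed

definition mm :: "nat \<Rightarrow> (nat \<Rightarrow> nat \<Rightarrow> real) \<Rightarrow> (nat \<Rightarrow> nat \<Rightarrow> real) \<Rightarrow> nat \<Rightarrow> nat \<Rightarrow> real" where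
  "mm n A B = (\<lambda>i k. \<Sum>j<n. A i j * B j k)"

lemma mv_mv: "mv n A (mv n B x) = mv n (mm n A B) x"
proof (rule ext)
  fix i
  have "mv n A (mv n B x) i = (\<Sum>j<n. \<Sum>k<n. A i j * B j k * x k)"
    unfolding mv_def by (simp add: sum_distrib_left mult.assoc)
  also have "\<dots> = (\<Sum>k<n. \<Sum>j<n. A i j * B j k * x k)" by (rule sum.swap)
  also have "\<dots> = mv n (mm n A B) x i"
    unfolding mv_def mm_def by (simp add: sum_distrib_right)
  finally show "mv n A (mv n B x) i = mv n (mm n A B) x i" .
qed

lemma mv_scale: "mv n A (\<lambda>a. c * x a) = (\<lambda>i. c * mv n A x i)"
  unfolding mv_def by (auto simp: sum_distrib_left algebra_simps intro!: ext)

definition orthm :: "nat \<Rightarrow> (nat \<Rightarrow> nat \<Rightarrow> real) \<Rightarrow> bool" where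
  "orthm m H \<longleftrightarrow> (\<forall>i<m. \<forall>j<m. (\<Sum>k<m. H i k * H k j) = (if i = j then 1 else 0))"

lemma HH_apply:
  assumes "orthm m H" "i < m"
  shows "mv m H (mv m H w) i = w i"
proof -
  have "mv m H (mv m H w) i = (\<Sum>j<m. (\<Sum>k<m. H i k * H k j) * w j)"
    unfolding mv_mv by (simp add: mv_def mm_def)
  also have "\<dots> = (\<Sum>j<m. (if j = i then w j else 0))"
    using assms unfolding orthm_def by (intro sum.cong) auto
  also have "\<dots> = w i" using assms(2) by (simp add: sum.delta)
  finally show ?thesis .
qed

lemma H_inner:
  assumes sy: "symm m H" and o: "orthm m H"
  shows "(\<Sum>i<m. mv m H y i * mv m H z i) = (\<Sum>a<m. y a * z a)"
proof -
  have "(\<Sum>i<m. mv m H y i * mv m H z i) = (\<Sum>i<m. \<Sum>a<m. y a * (H a i * mv m H z i))"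
  proof (rule sum.cong[OF refl])
    fix i assume i: "i \<in> {..<m}"
    have "mv m H y i * mv m H z i = (\<Sum>a<m. H i a * y a * mv m H z i)"
      unfolding mv_def[of m H y] by (simp add: sum_distrib_right)
    also have "\<dots> = (\<Sum>a<m. y a * (H a i * mv m H z i))"
      using sy i unfolding symm_def by (intro sum.cong refl) auto
    finally show "mv m H y i * mv m H z i = (\<Sum>a<m. y a * (H a i * mv m H z i))" .
  qed
  also have "\<dots> = (\<Sum>a<m. y a * mv m H (mv m H z) a)"
    by (subst sum.swap) (simp add: mv_def[of m H "mv m H z"] sum_distrib_left)
  also have "\<dots> = (\<Sum>a<m. y a * z a)"
    using HH_apply[OF o] by (intro sum.cong) auto
  finally show ?thesis .
qed

lemma sum_lessThan_Suc_split: "(\<Sum>j<Suc n. f j) = (\<Sum>j<n. f j) + f n"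
  by simp

lemma spectral: "symm n S \<Longrightarrow> \<exists>e u. orthon n u \<and> eigp n S e u"
proof (induction n arbitrary: S)
  case 0
  show ?case by (auto simp: orthon_def eigp_def)
next
  case (Suc n S)
  define m where "m = Suc n"
  obtain lam v where v1: "(\<Sum>i<Suc n. v i * v i) = 1" and ev: "\<forall>i<Suc n. mv (Suc n) S v i = lam * v i"
    using real_eigvec[of "Suc n" S] Suc.prems by auto
  obtain H where Hs: "symm (Suc n) H" and HH: "orthm (Suc n) H" and Hv: "\<forall>i<Suc n. H i n = v i"
    using householder[OF v1] unfolding orthm_def by blast
  define T where "T = mm m H (mm m S H)"
  have Tsum: "T i j = (\<Sum>a<m. \<Sum>b<m. H i a * S a b * H b j)" for i j
    unfolding T_def mm_def by (simp add: sum_distrib_left mult.assoc)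
  have Tsym: "symm m T"
    unfolding symm_def
  proof (intro allI impI)
    fix i j assume i: "i < m" and j: "j < m"
    have "T j i = (\<Sum>b<m. \<Sum>a<m. H j b * S b a * H a i)" by (simp add: Tsum)
    also have "\<dots> = (\<Sum>b<m. \<Sum>a<m. H i a * S a b * H b j)"
      using Hs Suc.prems i j unfolding symm_def m_def by (intro sum.cong refl) auto
    also have "\<dots> = T i j" unfolding Tsum by (rule sum.swap)
    finally show "T i j = T j i" by simp
  qed
  have key: "mv m T w = mv m H (mv m S (mv m H w))" for w
    unfolding T_def mv_mv ..
  have A1: "mv m S (\<lambda>b. H b n) = mv m S v"
    by (rule mv_cong) (use Hv in \<open>simp add: m_def\<close>)
  have A2: "mv m H (mv m S v) = mv m H (\<lambda>a. lam * v a)"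
    by (rule mv_cong) (use ev in \<open>simp add: m_def\<close>)
  have A3: "mv m H v = mv m H (\<lambda>b. H b n)"
    by (rule mv_cong) (use Hv in \<open>simp add: m_def\<close>)
  have Tn: "T i n = lam * (if i = n then 1 else 0)" if i: "i < m" for i
  proof -
    have "T i n = mv m H (mv m S (\<lambda>b. H b n)) i"
      unfolding T_def by (simp add: mv_def mm_def)
    also have "\<dots> = lam * mv m H v i" unfolding A1 A2 by (simp add: mv_scale)
    also have "mv m H v i = (if i = n then 1 else 0)"
      unfolding A3 using HH i unfolding orthm_def m_def mv_def by auto
    finally show ?thesis .
  qed
  have "symm n T" using Tsym unfolding symm_def m_def by auto
  from Suc.IH[OF this] obtain e' u' where IHo: "orthon n u'" and IHe: "eigp n T e' u'" by blast
  define y where "y = (\<lambda>k a. if k < n then (if a < n then u' k a else 0) else (if a = n then 1 else (0::real)))"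
  define u where "u = (\<lambda>k. mv m H (y k))"
  define e where "e = (\<lambda>k. if k < n then e' k else lam)"
  have oy: "orthon m y"
    unfolding orthon_def
  proof (intro allI impI)
    fix k l assume k: "k < m" and l: "l < m"
    show "(\<Sum>i<m. y k i * y l i) = (if k = l then 1 else 0)"
    proof (cases "k < n")
      case True
      show ?thesis
      proof (cases "l < n")
        case True
        have "(\<Sum>i<m. y k i * y l i) = (\<Sum>i<n. u' k i * u' l i)"
          unfolding m_def sum_lessThan_Suc_split using \<open>k<n\<close> True
          by (simp add: y_def)
        thus ?thesis using IHo \<open>k<n\<close> True unfolding orthon_def by simp
      next
        case False
        hence "l = n" using l m_def by simp
        thus ?thesis unfolding m_def sum_lessThan_Suc_split using \<open>k<n\<close>
          by (simp add: y_def)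
      qed
    next
      case False
      hence kn: "k = n" using k m_def by simp
      show ?thesis
      proof (cases "l < n")
        case True
        thus ?thesis unfolding m_def sum_lessThan_Suc_split using kn
          by (simp add: y_def)
      next
        case False
        hence "l = n" using l m_def by simp
        thus ?thesis unfolding m_def sum_lessThan_Suc_split using kn
          by (simp add: y_def)
      qed
    qed
  qed
  have "orthon m u"
    using oy H_inner[OF Hs[folded m_def] HH[folded m_def]] unfolding orthon_def u_def by simp
  moreover have Ty: "mv m T (y k) i = e k * y k i" if k: "k < m" and i: "i < m" for k i
  proof (cases "k < n")
    case True
    show ?thesis
    proof (cases "i < n")
      case True
      have "mv m T (y k) i = mv n T (u' k) i"
        unfolding mv_def m_def sum_lessThan_Suc_split using \<open>k<n\<close> by (simp add: y_def)
      thus ?thesis using IHe \<open>k<n\<close> True unfolding eigp_def by (simp add: e_def y_def)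
    next
      case False
      hence "i = n" using i m_def by simp
      have "mv m T (y k) i = (\<Sum>j<n. T n j * u' k j)"
        unfolding mv_def m_def sum_lessThan_Suc_split using \<open>k<n\<close> \<open>i=n\<close> by (simp add: y_def)
      also have "\<dots> = 0"
        using Tn Tsym unfolding symm_def m_def by (intro sum.neutral) auto
      finally show ?thesis using \<open>i = n\<close> \<open>k < n\<close> by (simp add: y_def)
    qed
  next
    case False
    hence kn: "k = n" using k m_def by simp
    have "mv m T (y k) i = T i n"
      unfolding mv_def m_def using kn by (simp add: y_def sum.delta if_distrib[of "\<lambda>x. _ * x"] cong: if_cong)
    thus ?thesis using Tn[OF i] kn by (simp add: e_def y_def)
  qed
  have "eigp m S e u"
    unfolding eigp_def
  proof (intro allI impI)
    fix k i assume k: "k < m" and i: "i < m"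
    have B1: "mv m H (mv m S (u k)) = mv m T (y k)"
      unfolding key u_def ..
    have B2: "mv m H (mv m T (y k)) = mv m H (\<lambda>a. e k * y k a)"
      by (rule mv_cong) (use Ty[OF k] in simp)
    have "mv m S (u k) i = mv m H (mv m H (mv m S (u k))) i"
      using HH_apply[OF HH[folded m_def] i] by simp
    also have "\<dots> = e k * u k i" unfolding B1 B2 by (simp add: mv_scale u_def)
    finally show "mv m S (u k) i = e k * u k i" .
  qed
  ultimately have "orthon m u \<and> eigp m S e u" by blast
  hence "orthon (Suc n) u \<and> eigp (Suc n) S e u" by (simp add: m_def)
  thus ?case by blast
qed



definition compl :: "nat \<Rightarrow> (nat \<Rightarrow> nat \<Rightarrow> real) \<Rightarrow> bool" where
  "compl n u \<longleftrightarrow> (\<forall>i<n. \<forall>j<n. (\<Sum>k<n. u k i * u k j) = (if i = j then 1 else 0))"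

lemma char_poly_eigs:
  assumes o: "orthon n u" and ep: "eigp n S e u"
  shows "char_poly (mat n n (\<lambda>(i,j). S i j)) = (\<Prod>a\<leftarrow>map e [0..<n]. [:-a,1:])"
    and "compl n u"
proof -
  define U where "U = mat n n (\<lambda>(i,k). u k i)"
  define D where "D = mat n n (\<lambda>(i,j). if i = j then e i else 0)"
  define M where "M = mat n n (\<lambda>(i,j). S i j)"
  have U: "U \<in> carrier_mat n n" and D: "D \<in> carrier_mat n n" and M: "M \<in> carrier_mat n n"
    and Ut: "transpose_mat U \<in> carrier_mat n n"
    by (auto simp: U_def D_def M_def)
  have UtU: "transpose_mat U * U = 1\<^sub>m n"
  proof (rule eq_matI)
    fix k l assume k: "k < dim_row (1\<^sub>m n)" and l: "l < dim_col (1\<^sub>m n)"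
    have "(transpose_mat U * U) $$ (k,l) = (\<Sum>i<n. u k i * u l i)"
      using k l by (simp add: U_def scalar_prod_def atLeast0LessThan)
    also have "\<dots> = 1\<^sub>m n $$ (k,l)" using o k l unfolding orthon_def by simp
    finally show "(transpose_mat U * U) $$ (k,l) = 1\<^sub>m n $$ (k,l)" .
  qed (auto simp: U_def)
  have UUt: "U * transpose_mat U = 1\<^sub>m n"
    by (rule mat_mult_left_right_inverse[OF Ut U UtU])
  have MU: "M * U = U * D"
  proof (rule eq_matI)
    fix i k assume i: "i < dim_row (U * D)" and k: "k < dim_col (U * D)"
    hence i: "i < n" and k: "k < n" using U D by auto
    have "(M * U) $$ (i,k) = mv n S (u k) i"
      using i k by (simp add: U_def M_def scalar_prod_def atLeast0LessThan mv_def)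
    also have "\<dots> = e k * u k i" using ep i k unfolding eigp_def by simp
    also have "\<dots> = (U * D) $$ (i,k)"
      using i k by (simp add: U_def D_def scalar_prod_def atLeast0LessThan if_distrib[of "\<lambda>x. _ * x"] sum.delta' cong: if_cong)
    finally show "(M * U) $$ (i,k) = (U * D) $$ (i,k)" .
  qed (use U D M in auto)
  have "M = M * (U * transpose_mat U)" using M by (simp add: UUt)
  also have "\<dots> = (M * U) * transpose_mat U" using M U Ut by (simp add: assoc_mult_mat)
  also have "\<dots> = U * D * transpose_mat U" by (simp add: MU)
  finally have MUD: "M = U * D * transpose_mat U" .
  have "similar_mat_wit M D U (transpose_mat U)"
    unfolding similar_mat_wit_def Let_def using M D U Ut UUt UtU MUD by auto
  hence "similar_mat M D" unfolding similar_mat_def by blast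
  hence "char_poly M = char_poly D" by (rule char_poly_similar)
  also have "\<dots> = (\<Prod>a\<leftarrow>diag_mat D. [:-a,1:])"
    by (rule char_poly_upper_triangular[OF D]) (auto simp: upper_triangular_def D_def)
  also have "diag_mat D = map e [0..<n]" by (auto simp: diag_mat_def D_def)
  finally show "char_poly (mat n n (\<lambda>(i,j). S i j)) = (\<Prod>a\<leftarrow>map e [0..<n]. [:-a,1:])"
    unfolding M_def .
  show "compl n u" unfolding compl_def
  proof (intro allI impI)
    fix i j assume i: "i < n" and j: "j < n"
    have "(U * transpose_mat U) $$ (i,j) = (\<Sum>k<n. u k i * u k j)"
      using i j by (simp add: U_def scalar_prod_def atLeast0LessThan)
    thus "(\<Sum>k<n. u k i * u k j) = (if i = j then 1 else 0)" using UUt i j by simp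
  qed
qed

lemma proots_linear_prod: "proots (\<Prod>a\<leftarrow>xs. [:-a,1::real:]) = mset xs"
proof (induction xs)
  case Nil thus ?case by simp
next
  case (Cons x xs)
  have "(\<Prod>a\<leftarrow>xs. [:-a,1::real:]) \<noteq> 0" by (auto simp: prod_list_zero_iff)
  moreover have "[:-x,1::real:] \<noteq> 0" by simp
  ultimately have "proots ([:-x,1::real:] * (\<Prod>a\<leftarrow>xs. [:-a,1::real:])) = proots [:-x,1::real:] + proots (\<Prod>a\<leftarrow>xs. [:-a,1::real:])"
    by (rule proots_mult[rotated])
  moreover have "proots [:-x,1::real:] = {#x#}" using proots_linear_factor[of "-x"] by simp
  ultimately show ?case using Cons by simp
qed

lemma spectral_sorted:
  assumes sy: "symm n S"
  shows "\<exists>e u. orthon n u \<and> eigp n S e u \<and> compl n u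
     \<and> eigs_desc (mat n n (\<lambda>(i,j). S i j)) = map e [0..<n]
     \<and> (\<forall>k l. k \<le> l \<longrightarrow> l < n \<longrightarrow> e l \<le> e k)"
proof -
  obtain e u where o: "orthon n u" and ep: "eigp n S e u" using spectral[OF sy] by blast
  note cp = char_poly_eigs[OF o ep]
  define xs where "xs = map e [0..<n]"
  define es where "es = rev (sort xs)"
  have ed: "eigs_desc (mat n n (\<lambda>(i,j). S i j)) = es"
    unfolding eigs_desc_def cp(1) proots_linear_prod es_def xs_def[symmetric]
    by (simp only: sorted_list_of_multiset_mset)
  have "mset es = mset xs" unfolding es_def by simp
  then obtain p where p: "p permutes {..<length xs}" and pl: "permute_list p xs = es"
    by (rule mset_eq_permutation)
  have p': "p permutes {..<n}" using p by (simp add: xs_def)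
  have pn: "k < n \<Longrightarrow> p k < n" for k using permutes_in_image[OF p'] by simp
  have pinj: "k < n \<Longrightarrow> l < n \<Longrightarrow> p k = p l \<longleftrightarrow> k = l" for k l
    using permutes_inj_on[OF p'] unfolding inj_on_def by auto
  have esn: "k < n \<Longrightarrow> es ! k = e (p k)" for k
    using permute_list_nth[OF p, of k] pl pn[of k] by (simp add: xs_def)
  define e' where "e' = (\<lambda>k. e (p k))"
  define u' where "u' = (\<lambda>k. u (p k))"
  have "orthon n u'" using o pn pinj unfolding orthon_def u'_def by auto
  moreover have "eigp n S e' u'" using ep pn unfolding eigp_def e'_def u'_def by auto
  moreover have "compl n u'"
  proof -
    have "(\<Sum>k<n. u' k i * u' k j) = (\<Sum>k<n. u k i * u k j)" for i j
      unfolding u'_def using sum.permute[OF p', of "\<lambda>k. u k i * u k j"] by (simp add: comp_def)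
    thus ?thesis using cp(2) unfolding compl_def by simp
  qed
  moreover have "es = map e' [0..<n]"
    by (rule nth_equalityI) (auto simp: es_def xs_def esn[unfolded es_def xs_def] e'_def)
  moreover have "\<forall>k l. k \<le> l \<longrightarrow> l < n \<longrightarrow> e' l \<le> e' k"
  proof (intro allI impI)
    fix k l assume kl: "k \<le> l" "l < n"
    have len: "length (sort xs) = n" by (simp add: xs_def)
    have "e' l = sort xs ! (n - 1 - l)" using esn[of l] kl rev_nth[of l "sort xs"] len unfolding e'_def es_def by simp
    also have "\<dots> \<le> sort xs ! (n - 1 - k)" by (rule sorted_nth_mono) (use kl len in auto)
    also have "\<dots> = e' k" using esn[of k] kl rev_nth[of k "sort xs"] len unfolding e'_def es_def by simp
    finally show "e' l \<le> e' k" .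
  qed
  ultimately show ?thesis using ed by blast
qed



definition Qf :: "nat \<Rightarrow> (nat \<Rightarrow> nat \<Rightarrow> real) \<Rightarrow> (nat \<Rightarrow> real) \<Rightarrow> real" where
  "Qf n S x = (\<Sum>i<n. \<Sum>j<n. x i * S i j * x j)"

lemma Qf_mv: "Qf n S x = (\<Sum>i<n. x i * mv n S x i)"
  unfolding Qf_def mv_def by (simp add: sum_distrib_left mult.assoc)

lemma rayleigh:
  assumes o: "orthon n u" and ep: "eigp n S e u" and c: "compl n u"
  shows "Qf n S x = (\<Sum>k<n. e k * (\<Sum>i<n. x i * u k i)^2)"
    and "(\<Sum>i<n. x i * x i) = (\<Sum>k<n. (\<Sum>i<n. x i * u k i)^2)"
proof -
  define cc where "cc = (\<lambda>k. \<Sum>i<n. x i * u k i)"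
  have xexp: "x i = (\<Sum>k<n. cc k * u k i)" if i: "i < n" for i
  proof -
    have "(\<Sum>k<n. cc k * u k i) = (\<Sum>k<n. \<Sum>j<n. x j * (u k j * u k i))"
      unfolding cc_def by (simp add: sum_distrib_right mult.assoc)
    also have "\<dots> = (\<Sum>j<n. x j * (\<Sum>k<n. u k j * u k i))"
      by (subst sum.swap) (simp add: sum_distrib_left)
    also have "\<dots> = (\<Sum>j<n. if j = i then x j else 0)"
      using c i unfolding compl_def by (intro sum.cong) auto
    also have "\<dots> = x i" using i by (simp add: sum.delta)
    finally show ?thesis by simp
  qed
  have mvS: "mv n S x i = (\<Sum>k<n. cc k * (e k * u k i))" if i: "i < n" for i
  proof -
    have "mv n S x i = (\<Sum>j<n. S i j * (\<Sum>k<n. cc k * u k j))"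
      unfolding mv_def using xexp by (intro sum.cong) auto
    also have "\<dots> = (\<Sum>j<n. \<Sum>k<n. cc k * (S i j * u k j))"
      by (simp add: sum_distrib_left algebra_simps)
    also have "\<dots> = (\<Sum>k<n. \<Sum>j<n. cc k * (S i j * u k j))" by (rule sum.swap)
    also have "\<dots> = (\<Sum>k<n. cc k * mv n S (u k) i)"
      unfolding mv_def by (simp add: sum_distrib_left)
    also have "\<dots> = (\<Sum>k<n. cc k * (e k * u k i))"
      using ep i unfolding eigp_def by (intro sum.cong) auto
    finally show ?thesis .
  qed
  have "Qf n S x = (\<Sum>i<n. x i * (\<Sum>k<n. cc k * (e k * u k i)))"
    unfolding Qf_mv using mvS by (intro sum.cong) auto
  also have "\<dots> = (\<Sum>i<n. \<Sum>k<n. e k * cc k * (x i * u k i))"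
    by (simp add: sum_distrib_left algebra_simps)
  also have "\<dots> = (\<Sum>k<n. \<Sum>i<n. e k * cc k * (x i * u k i))" by (rule sum.swap)
  also have "\<dots> = (\<Sum>k<n. e k * cc k * (\<Sum>i<n. x i * u k i))"
    by (simp add: sum_distrib_left)
  also have "\<dots> = (\<Sum>k<n. e k * (\<Sum>i<n. x i * u k i)^2)"
    unfolding cc_def by (simp add: power2_eq_square algebra_simps)
  finally show "Qf n S x = (\<Sum>k<n. e k * (\<Sum>i<n. x i * u k i)^2)" .
  have "(\<Sum>i<n. x i * x i) = (\<Sum>i<n. x i * (\<Sum>k<n. cc k * u k i))"
    using xexp by (intro sum.cong) auto
  also have "\<dots> = (\<Sum>i<n. \<Sum>k<n. cc k * (x i * u k i))"
    by (simp add: sum_distrib_left algebra_simps)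
  also have "\<dots> = (\<Sum>k<n. \<Sum>i<n. cc k * (x i * u k i))" by (rule sum.swap)
  also have "\<dots> = (\<Sum>k<n. cc k * (\<Sum>i<n. x i * u k i))"
    by (simp add: sum_distrib_left)
  also have "\<dots> = (\<Sum>k<n. (\<Sum>i<n. x i * u k i)^2)"
    unfolding cc_def by (simp add: power2_eq_square)
  finally show "(\<Sum>i<n. x i * x i) = (\<Sum>k<n. (\<Sum>i<n. x i * u k i)^2)" .
qed

lemma eig_is_Qf:
  assumes o: "orthon n u" and ep: "eigp n S e u" and k: "k < n"
  shows "Qf n S (u k) = e k"
proof -
  have "Qf n S (u k) = (\<Sum>i<n. u k i * (e k * u k i))"
    unfolding Qf_mv using ep k unfolding eigp_def by (intro sum.cong) auto
  also have "\<dots> = e k * (\<Sum>i<n. u k i * u k i)" by (simp add: sum_distrib_left algebra_simps)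
  also have "\<dots> = e k" using o k unfolding orthon_def by simp
  finally show ?thesis .
qed

lemma gap_of_sorted:
  assumes ed: "eigs_desc M = map e [0..<n]" and n: "n \<ge> 2"
    and srt: "\<forall>k l. k \<le> l \<longrightarrow> l < n \<longrightarrow> e l \<le> e k" and nn: "\<forall>k<n. e k \<ge> 0"
  shows "spectral_gap M = 1 - e 1"
proof -
  have "eigs_desc M ! 1 = e 1" using ed n by simp
  moreover have "last (eigs_desc M) = e (n - 1)" using ed n by (simp add: last_map)
  moreover have "e (n - 1) \<le> e 1" "0 \<le> e (n - 1)" "0 \<le> e 1" using srt nn n by auto
  ultimately show ?thesis unfolding spectral_gap_def by simp
qed

lemma cf_compare:
  assumes n: "n \<ge> 2" and sy1: "symm n S1" and sy2: "symm n S2"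
    and Q: "\<And>x. 0 \<le> Qf n S1 x \<and> Qf n S1 x \<le> Qf n S2 x"
  shows "spectral_gap (mat n n (\<lambda>(i,j). S2 i j)) \<le> spectral_gap (mat n n (\<lambda>(i,j). S1 i j))"
proof -
  obtain e1 u1 where o1: "orthon n u1" and ep1: "eigp n S1 e1 u1" and c1: "compl n u1"
    and ed1: "eigs_desc (mat n n (\<lambda>(i,j). S1 i j)) = map e1 [0..<n]"
    and s1: "\<forall>k l. k \<le> l \<longrightarrow> l < n \<longrightarrow> e1 l \<le> e1 k"
    using spectral_sorted[OF sy1] by blast
  obtain e2 u2 where o2: "orthon n u2" and ep2: "eigp n S2 e2 u2" and c2: "compl n u2"
    and ed2: "eigs_desc (mat n n (\<lambda>(i,j). S2 i j)) = map e2 [0..<n]"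
    and s2: "\<forall>k l. k \<le> l \<longrightarrow> l < n \<longrightarrow> e2 l \<le> e2 k"
    using spectral_sorted[OF sy2] by blast
  have nn1: "\<forall>k<n. e1 k \<ge> 0" using eig_is_Qf[OF o1 ep1] Q by metis
  have nn2: "\<forall>k<n. e2 k \<ge> 0" using eig_is_Qf[OF o2 ep2] Q by (metis order_trans)
  define al where "al = (\<Sum>i<n. u2 0 i * u1 0 i)"
  define be where "be = (\<Sum>i<n. u2 0 i * u1 1 i)"
  define a where "a = (if al = 0 \<and> be = 0 then 1 else be)"
  define b where "b = (if al = 0 \<and> be = 0 then 0 else - al)"
  have ab: "a * al + b * be = 0" unfolding a_def b_def by auto
  have abpos: "a^2 + b^2 > 0" unfolding a_def b_def by (auto simp: sum_power2_gt_zero_iff)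
  define x where "x = (\<lambda>i. a * u1 0 i + b * u1 1 i)"
  have n01: "0 < n" "1 < n" using n by auto
  have cx: "(\<Sum>i<n. x i * u1 k i) = a * (if k = 0 then 1 else 0) + b * (if k = 1 then 1 else 0)"
    if k: "k < n" for k
  proof -
    have "(\<Sum>i<n. x i * u1 k i) = a * (\<Sum>i<n. u1 0 i * u1 k i) + b * (\<Sum>i<n. u1 1 i * u1 k i)"
      unfolding x_def by (simp add: sum.distrib sum_distrib_left algebra_simps)
    thus ?thesis using o1 k n01 unfolding orthon_def by auto
  qed
  have sq: "(a * (if k = 0 then 1 else 0) + b * (if k = 1 then 1 else 0))^2
        = (if k = 0 then a^2 else 0) + (if k = 1 then b^2 else 0)" for k :: nat
    by auto
  have Q1: "Qf n S1 x = e1 0 * a^2 + e1 1 * b^2"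
  proof -
    have "Qf n S1 x = (\<Sum>k<n. e1 k * ((if k = 0 then a^2 else 0) + (if k = 1 then b^2 else 0)))"
      unfolding rayleigh(1)[OF o1 ep1 c1] using cx sq by (intro sum.cong) auto
    also have "\<dots> = (\<Sum>k<n. (if k = 0 then e1 k * a^2 else 0)) + (\<Sum>k<n. (if k = 1 then e1 k * b^2 else 0))"
      by (simp add: distrib_left sum.distrib if_distrib[of "\<lambda>t. _ * t"] cong: if_cong)
    also have "\<dots> = e1 0 * a^2 + e1 1 * b^2" using n01 by (simp add: sum.delta)
    finally show ?thesis .
  qed
  have N1: "(\<Sum>i<n. x i * x i) = a^2 + b^2"
  proof -
    have "(\<Sum>i<n. x i * x i) = (\<Sum>k<n. (if k = 0 then a^2 else 0) + (if k = 1 then b^2 else 0))"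
      unfolding rayleigh(2)[OF o1 ep1 c1] using cx sq by (intro sum.cong) auto
    also have "\<dots> = a^2 + b^2" using n01 by (simp add: sum.distrib sum.delta)
    finally show ?thesis .
  qed
  have xw: "(\<Sum>i<n. x i * u2 0 i) = 0"
  proof -
    have "(\<Sum>i<n. x i * u2 0 i) = a * al + b * be"
      unfolding x_def al_def be_def by (simp add: sum.distrib sum_distrib_left algebra_simps)
    thus ?thesis using ab by simp
  qed
  have Q2: "Qf n S2 x \<le> e2 1 * (a^2 + b^2)"
  proof -
    have "Qf n S2 x = (\<Sum>k<n. e2 k * (\<Sum>i<n. x i * u2 k i)^2)" by (rule rayleigh(1)[OF o2 ep2 c2])
    also have "\<dots> \<le> (\<Sum>k<n. e2 1 * (\<Sum>i<n. x i * u2 k i)^2)"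
    proof (rule sum_mono)
      fix k assume k: "k \<in> {..<n}"
      show "e2 k * (\<Sum>i<n. x i * u2 k i)^2 \<le> e2 1 * (\<Sum>i<n. x i * u2 k i)^2"
      proof (cases "k = 0")
        case True thus ?thesis using xw by simp
      next
        case False thus ?thesis using s2 k by (intro mult_right_mono) auto
      qed
    qed
    also have "\<dots> = e2 1 * (\<Sum>i<n. x i * x i)"
      unfolding rayleigh(2)[OF o2 ep2 c2] by (simp add: sum_distrib_left)
    finally show ?thesis using N1 by simp
  qed
  have "e1 1 * (a^2 + b^2) \<le> e1 0 * a^2 + e1 1 * b^2"
    using s1 n01 by (simp add: distrib_left mult_right_mono)
  also have "\<dots> \<le> e2 1 * (a^2 + b^2)" using Q[of x] Q1 Q2 by simp
  finally have "e1 1 \<le> e2 1" using abpos by simp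
  moreover have "spectral_gap (mat n n (\<lambda>(i,j). S1 i j)) = 1 - e1 1"
    by (rule gap_of_sorted[OF ed1 n s1 nn1])
  moreover have "spectral_gap (mat n n (\<lambda>(i,j). S2 i j)) = 1 - e2 1"
    by (rule gap_of_sorted[OF ed2 n s2 nn2])
  ultimately show ?thesis by simp
qed



lemma state_enum_bij: "finite \<Omega> \<Longrightarrow> bij_betw (state_enum \<Omega>) {0..<card \<Omega>} \<Omega>"
  unfolding state_enum_def by (rule someI_ex[OF ex_bij_betw_nat_finite])

lemma trans_gap_compare:
  fixes \<Omega> :: "'s set" and P Q :: "'s \<Rightarrow> 's \<Rightarrow> real" and w :: "'s \<Rightarrow> real"
  assumes fin: "finite \<Omega>" and card: "card \<Omega> \<ge> 2" and wpos: "\<forall>s\<in>\<Omega>. w s > 0"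
    and revP: "\<forall>s\<in>\<Omega>. \<forall>t\<in>\<Omega>. w s * P s t = w t * P t s"
    and revQ: "\<forall>s\<in>\<Omega>. \<forall>t\<in>\<Omega>. w s * Q s t = w t * Q t s"
    and form: "\<And>f. 0 \<le> (\<Sum>s\<in>\<Omega>. \<Sum>t\<in>\<Omega>. f s * (w s * P s t) * f t)
        \<and> (\<Sum>s\<in>\<Omega>. \<Sum>t\<in>\<Omega>. f s * (w s * P s t) * f t) \<le> (\<Sum>s\<in>\<Omega>. \<Sum>t\<in>\<Omega>. f s * (w s * Q s t) * f t)"
  shows "spectral_gap (trans_mat \<Omega> Q) \<le> spectral_gap (trans_mat \<Omega> P)"
proof -
  define N where "N = card \<Omega>"
  define en where "en = state_enum \<Omega>"
  have bij: "bij_betw en {..<N} \<Omega>" using state_enum_bij[OF fin] unfolding en_def N_def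
    by (simp add: atLeast0LessThan)
  have enin: "i < N \<Longrightarrow> en i \<in> \<Omega>" for i using bij by (auto simp: bij_betw_def)
  define d where "d = (\<lambda>i. sqrt (w (en i)))"
  have dpos: "i < N \<Longrightarrow> d i > 0" for i using wpos enin unfolding d_def by auto
  have dsq: "i < N \<Longrightarrow> d i * d i = w (en i)" for i using wpos enin unfolding d_def
    by (simp add: less_imp_le)
  define sm where "sm = (\<lambda>K :: 's \<Rightarrow> 's \<Rightarrow> real. \<lambda>i j. d i * K (en i) (en j) / d j)"
  have symm_sm: "symm N (sm K)" if rev: "\<forall>s\<in>\<Omega>. \<forall>t\<in>\<Omega>. w s * K s t = w t * K t s" for K
    unfolding symm_def
  proof (intro allI impI)
    fix i j assume i: "i < N" and j: "j < N"
    have "d i * d i * K (en i) (en j) = d j * d j * K (en j) (en i)"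
      using rev enin[OF i] enin[OF j] dsq[OF i] dsq[OF j] by simp
    thus "sm K i j = sm K j i" unfolding sm_def using dpos[OF i] dpos[OF j]
      by (simp add: field_simps)
  qed
  have gap_eq: "spectral_gap (trans_mat \<Omega> K) = spectral_gap (mat N N (\<lambda>(i,j). sm K i j))" for K
  proof -
    define T where "T = trans_mat \<Omega> K"
    define Dm where "Dm = mat N N (\<lambda>(i,j). if i = j then d i else 0)"
    define Di where "Di = mat N N (\<lambda>(i,j). if i = j then 1 / d i else 0)"
    have T: "T \<in> carrier_mat N N" unfolding T_def trans_mat_def N_def by simp
    have Tij: "i < N \<Longrightarrow> j < N \<Longrightarrow> T $$ (i,j) = K (en i) (en j)" for i j
      unfolding T_def trans_mat_def N_def en_def by simp
    have Dm: "Dm \<in> carrier_mat N N" and Di: "Di \<in> carrier_mat N N" by (auto simp: Dm_def Di_def)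
    have DmT: "(Dm * T) $$ (i,l) = d i * T $$ (i,l)" if "i < N" "l < N" for i l
      using that T by (simp add: Dm_def scalar_prod_def if_distrib[of "\<lambda>x. x * _"] sum.delta cong: if_cong)
    have eq1: "mat N N (\<lambda>(i,j). sm K i j) = Dm * T * Di"
    proof (rule eq_matI)
      fix i j assume i: "i < dim_row (Dm * T * Di)" and j: "j < dim_col (Dm * T * Di)"
      hence i: "i < N" and j: "j < N" using Dm Di by auto
      have "(Dm * T * Di) $$ (i,j) = row (Dm * T) i \<bullet> col Di j"
        by (rule index_mult_mat(1)) (use i j Dm T Di in auto)
      also have "\<dots> = (\<Sum>l\<in>{0..<N}. (Dm * T) $$ (i,l) * Di $$ (l,j))"
        unfolding scalar_prod_def using i j Dm T Di by (auto intro!: sum.cong)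
      also have "\<dots> = (\<Sum>l\<in>{0..<N}. if l = j then d i * T $$ (i,l) * (1 / d l) else 0)"
        using i j by (intro sum.cong) (auto simp: DmT Di_def)
      also have "\<dots> = d i * T $$ (i,j) / d j" using j by (simp add: sum.delta)
      finally show "mat N N (\<lambda>(i,j). sm K i j) $$ (i,j) = (Dm * T * Di) $$ (i,j)"
        using i j by (simp add: sm_def Tij)
    qed (use Dm Di in auto)
    have DD1: "Dm * Di = 1\<^sub>m N"
    proof (rule eq_matI)
      fix i j assume i: "i < dim_row (1\<^sub>m N)" and j: "j < dim_col (1\<^sub>m N)"
      have i': "i < N" and j': "j < N" using i j by auto
      have "(Dm * Di) $$ (i,j) = (\<Sum>l\<in>{0..<N}. Dm $$ (i,l) * Di $$ (l,j))"
        using i' j' Dm Di by (simp add: scalar_prod_def)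
      also have "\<dots> = (\<Sum>l\<in>{0..<N}. if l = i then (if i = j then 1 else 0) else 0)"
        using i' j' dpos[OF i'] by (intro sum.cong) (auto simp: Dm_def Di_def)
      also have "\<dots> = 1\<^sub>m N $$ (i,j)" using i' j' by (simp add: sum.delta)
      finally show "(Dm * Di) $$ (i,j) = 1\<^sub>m N $$ (i,j)" .
    qed (auto simp: Dm_def Di_def)
    have DD2: "Di * Dm = 1\<^sub>m N" by (rule mat_mult_left_right_inverse[OF Dm Di DD1])
    have "similar_mat_wit (mat N N (\<lambda>(i,j). sm K i j)) T Dm Di"
      unfolding similar_mat_wit_def Let_def using eq1 DD1 DD2 Dm Di T by auto
    hence "similar_mat (mat N N (\<lambda>(i,j). sm K i j)) T" unfolding similar_mat_def by blast
    hence "char_poly (mat N N (\<lambda>(i,j). sm K i j)) = char_poly T" by (rule char_poly_similar)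
    thus ?thesis unfolding spectral_gap_def eigs_desc_def T_def by simp
  qed
  have Qf_eq: "Qf N (sm K) x = (\<Sum>s\<in>\<Omega>. \<Sum>t\<in>\<Omega>. f s * (w s * K s t) * f t)"
    if f: "f = (\<lambda>s. x (inv_into {..<N} en s) / d (inv_into {..<N} en s))" for K x f
  proof -
    have inv: "i < N \<Longrightarrow> inv_into {..<N} en (en i) = i" for i
      using bij by (simp add: bij_betw_def)
    have "(\<Sum>s\<in>\<Omega>. \<Sum>t\<in>\<Omega>. f s * (w s * K s t) * f t) = (\<Sum>i<N. \<Sum>j<N. f (en i) * (w (en i) * K (en i) (en j)) * f (en j))"
      by (simp add: sum.reindex_bij_betw[OF bij, symmetric])
    also have "\<dots> = Qf N (sm K) x" unfolding Qf_def
    proof (intro sum.cong refl)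
      fix i j assume i: "i \<in> {..<N}" and j: "j \<in> {..<N}"
      have "f (en i) * (w (en i) * K (en i) (en j)) * f (en j) = x i / d i * (d i * d i * K (en i) (en j)) * (x j / d j)"
        using i j by (simp add: f inv dsq)
      also have "\<dots> = x i * sm K i j * x j" unfolding sm_def using dpos i j by (simp add: field_simps)
      finally show "f (en i) * (w (en i) * K (en i) (en j)) * f (en j) = x i * sm K i j * x j" .
    qed
    finally show ?thesis by simp
  qed
  have "spectral_gap (mat N N (\<lambda>(i,j). sm Q i j)) \<le> spectral_gap (mat N N (\<lambda>(i,j). sm P i j))"
  proof (rule cf_compare)
    show "2 \<le> N" using card N_def by simp
    show "symm N (sm P)" by (rule symm_sm[OF revP])
    show "symm N (sm Q)" by (rule symm_sm[OF revQ])
    fix x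
    show "0 \<le> Qf N (sm P) x \<and> Qf N (sm P) x \<le> Qf N (sm Q) x"
      using form[of "\<lambda>s. x (inv_into {..<N} en s) / d (inv_into {..<N} en s)"]
      by (simp add: Qf_eq[OF refl])
  qed
  thus ?thesis using gap_eq by simp
qed



lemma sum_indicator_card:
  assumes "finite U"
  shows "(\<Sum>s\<in>U. if P s then (c::real) else 0) = c * card {s\<in>U. P s}"
  using assms by (simp add: sum.inter_filter[symmetric])

lemma cs_card:
  fixes g :: "'a \<Rightarrow> real"
  assumes "finite U"
  shows "(\<Sum>s\<in>U. g s)^2 \<le> card U * (\<Sum>s\<in>U. (g s)^2)"
proof -
  have "0 \<le> (\<Sum>s\<in>U. \<Sum>t\<in>U. (g s - g t)^2)" by (intro sum_nonneg) auto
  also have "\<dots> = (\<Sum>s\<in>U. \<Sum>t\<in>U. (g s)^2 + (g t)^2 - 2 * (g s * g t))"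
    by (simp add: power2_eq_square algebra_simps)
  also have "\<dots> = (\<Sum>s\<in>U. card U * (g s)^2 + (\<Sum>t\<in>U. (g t)^2) - 2 * (g s * (\<Sum>t\<in>U. g t)))"
    by (simp add: sum.distrib sum_subtractf sum_distrib_left)
  also have "\<dots> = 2 * (card U * (\<Sum>s\<in>U. (g s)^2)) - 2 * (\<Sum>s\<in>U. g s)^2"
    by (simp add: sum.distrib sum_subtractf sum_distrib_left[symmetric] sum_distrib_right[symmetric]
        power2_eq_square)
  finally show ?thesis by simp
qed

lemma class_CS:
  fixes U :: "'a set" and f :: "'a \<Rightarrow> real" and ag :: "'a \<Rightarrow> 'a \<Rightarrow> bool"
  assumes fin: "finite U" and m: "m > 0"
    and sym: "\<And>s t. s \<in> U \<Longrightarrow> t \<in> U \<Longrightarrow> ag s t \<Longrightarrow> ag t s"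
    and trans: "\<And>s t r. s \<in> U \<Longrightarrow> t \<in> U \<Longrightarrow> r \<in> U \<Longrightarrow> ag s t \<Longrightarrow> ag t r \<Longrightarrow> ag s r"
    and cls: "\<And>t. t \<in> U \<Longrightarrow> card {s\<in>U. ag s t} = m"
    and K: "real (card U) \<le> K"
  shows "(\<Sum>s\<in>U. f s)^2 / K \<le> (\<Sum>s\<in>U. \<Sum>t\<in>U. if ag s t then f s * f t else 0) / m"
    and "0 \<le> (\<Sum>s\<in>U. \<Sum>t\<in>U. if ag s t then f s * f t else 0)"
proof -
  define g where "g = (\<lambda>s. \<Sum>t\<in>U. if ag s t then f t else 0)"
  define X where "X = (\<Sum>s\<in>U. \<Sum>t\<in>U. if ag s t then f s * f t else 0)"
  have X: "X = (\<Sum>s\<in>U. f s * g s)" unfolding X_def g_def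
    by (simp add: sum_distrib_left if_distrib[of "\<lambda>x. _ * x"] cong: if_cong)
  have geq: "g s = g t" if "s \<in> U" "t \<in> U" "ag s t" for s t
  proof -
    have "ag s x = ag t x" if "x \<in> U" for x
      using sym[of s t] trans[of t s x] trans[of s t x] that \<open>s \<in> U\<close> \<open>t \<in> U\<close> \<open>ag s t\<close> by blast
    thus ?thesis unfolding g_def by (intro sum.cong refl) auto
  qed
  have sg: "(\<Sum>s\<in>U. g s) = m * (\<Sum>t\<in>U. f t)"
  proof -
    have "(\<Sum>s\<in>U. g s) = (\<Sum>t\<in>U. \<Sum>s\<in>U. if ag s t then f t else 0)"
      unfolding g_def by (rule sum.swap)
    also have "\<dots> = (\<Sum>t\<in>U. f t * card {s\<in>U. ag s t})"
      using fin by (simp add: sum_indicator_card mult.commute)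
    also have "\<dots> = (\<Sum>t\<in>U. m * f t)" using cls by (intro sum.cong) auto
    finally show ?thesis by (simp add: sum_distrib_left)
  qed
  have sg2: "(\<Sum>s\<in>U. (g s)^2) = m * X"
  proof -
    have gg: "(g s)^2 = (\<Sum>t\<in>U. if ag s t then f t * g s else 0)" for s
    proof -
      have gs: "g s = (\<Sum>t\<in>U. if ag s t then f t else 0)" by (simp add: g_def)
      have "(g s)^2 = (\<Sum>t\<in>U. if ag s t then f t else 0) * g s"
        unfolding power2_eq_square by (subst gs) (rule refl)
      also have "\<dots> = (\<Sum>t\<in>U. if ag s t then f t * g s else 0)"
        by (simp add: sum_distrib_right if_distrib[of "\<lambda>x. x * _"] cong: if_cong)
      finally show ?thesis .
    qed
    have "(\<Sum>s\<in>U. (g s)^2) = (\<Sum>s\<in>U. \<Sum>t\<in>U. if ag s t then f t * g s else 0)"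
      by (simp only: gg)
    also have "\<dots> = (\<Sum>t\<in>U. \<Sum>s\<in>U. if ag s t then f t * g s else 0)" by (rule sum.swap)
    also have "\<dots> = (\<Sum>t\<in>U. \<Sum>s\<in>U. if ag s t then f t * g t else 0)"
      using geq by (intro sum.cong refl) auto
    also have "\<dots> = (\<Sum>t\<in>U. f t * g t * card {s\<in>U. ag s t})"
      using fin by (simp add: sum_indicator_card)
    also have "\<dots> = (\<Sum>t\<in>U. m * (f t * g t))" using cls by (intro sum.cong) auto
    finally show ?thesis unfolding X by (simp add: sum_distrib_left)
  qed
  have "0 \<le> (\<Sum>s\<in>U. (g s)^2)" by (intro sum_nonneg) auto
  hence X0: "0 \<le> X" using sg2 m by (simp add: zero_le_mult_iff)
  thus "0 \<le> (\<Sum>s\<in>U. \<Sum>t\<in>U. if ag s t then f s * f t else 0)" unfolding X_def .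
  have "(m * (\<Sum>t\<in>U. f t))^2 \<le> card U * (m * X)"
    using cs_card[OF fin, of g] sg sg2 by simp
  hence "m * (m * (\<Sum>t\<in>U. f t)^2) \<le> m * (card U * X)" by (simp add: power2_eq_square algebra_simps)
  hence "m * (\<Sum>t\<in>U. f t)^2 \<le> card U * X" using m by simp
  also have "\<dots> \<le> K * X" using K X0 by (rule mult_right_mono)
  finally have A: "m * (\<Sum>t\<in>U. f t)^2 \<le> K * X" .
  show "(\<Sum>s\<in>U. f s)^2 / K \<le> X / m"
  proof (cases "K > 0")
    case True
    have "(\<Sum>s\<in>U. f s)^2 \<le> K * X / m" using A m by (simp add: pos_le_divide_eq mult.commute)
    thus ?thesis using True by (simp add: pos_divide_le_eq mult.commute)
  next
    case False
    hence "(\<Sum>s\<in>U. f s)^2 / K \<le> 0" by (simp add: divide_nonneg_nonpos)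
    also have "0 \<le> X / m" using X0 by simp
    finally show ?thesis .
  qed
qed



definition Egood :: "'v set \<Rightarrow> 'v set set \<Rightarrow> bool" where
  "Egood V E \<longleftrightarrow> (\<forall>e\<in>E. \<exists>u v. e = {u, v} \<and> u \<in> V \<and> v \<in> V)"

definition agree :: "'v set \<Rightarrow> 'v set set \<Rightarrow> ('v \<Rightarrow> nat) \<Rightarrow> ('v \<Rightarrow> nat) \<Rightarrow> bool" where
  "agree V A \<sigma> \<tau> \<longleftrightarrow> (\<forall>v\<in>V. \<not> isolated V A v \<longrightarrow> \<tau> v = \<sigma> v)"

definition wt :: "real \<Rightarrow> 'v set set \<Rightarrow> ('v \<Rightarrow> nat) \<Rightarrow> real" where
  "wt p E \<sigma> = (1 - p) ^ (card E - card (mono_edges E \<sigma>))"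

definition mu :: "real \<Rightarrow> 'v set set \<Rightarrow> 'v set set \<Rightarrow> real" where
  "mu p E A = p ^ card A * (1 - p) ^ (card E - card A)"

lemma mono_sub: "mono_edges E \<sigma> \<subseteq> E" unfolding mono_edges_def by auto

lemma const_of_mono:
  assumes "A \<subseteq> mono_edges E \<tau>" "(u, v) \<in> comp_rel V A"
  shows "\<tau> u = \<tau> v"
proof -
  from assms(2) have "(u, v) \<in> (edge_rel A)\<^sup>*" by (simp add: comp_rel_def)
  thus ?thesis
  proof (induction rule: rtrancl_induct)
    case base show ?case by simp
  next
    case (step y z)
    have "{y, z} \<in> A" using step(2) by (simp add: edge_rel_def)
    then obtain a b where "{y, z} = {a, b}" "\<tau> a = \<tau> b" using assms(1) unfolding mono_edges_def by blast
    hence "\<tau> y = \<tau> z" by (auto simp: doubleton_eq_iff)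
    with step show ?case by simp
  qed
qed

lemma mono_of_const:
  assumes eg: "Egood V E" and AE: "A \<subseteq> E" and c: "\<forall>(u, v)\<in>comp_rel V A. \<tau> u = \<tau> v"
  shows "A \<subseteq> mono_edges E \<tau>"
proof
  fix e assume e: "e \<in> A"
  have eE: "e \<in> E" using e AE by (rule subsetD[rotated])
  have "\<exists>u v. e = {u, v} \<and> u \<in> V \<and> v \<in> V" using eg eE unfolding Egood_def by (rule bspec)
  then obtain u v where uv: "e = {u, v}" "u \<in> V" "v \<in> V" by (elim exE conjE)
  have "(u, v) \<in> edge_rel A" using e uv by (simp add: edge_rel_def)
  hence uvc: "(u, v) \<in> comp_rel V A" unfolding comp_rel_def using uv by (simp add: r_into_rtrancl)
  have "\<tau> u = \<tau> v" using bspec[OF c uvc] by simp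
  thus "e \<in> mono_edges E \<tau>" using eE uv unfolding mono_edges_def by blast
qed

lemma const_iff:
  assumes "Egood V E" "A \<subseteq> E"
  shows "(\<forall>(u, v)\<in>comp_rel V A. \<tau> u = \<tau> v) \<longleftrightarrow> A \<subseteq> mono_edges E \<tau>"
proof
  assume c: "\<forall>(u, v)\<in>comp_rel V A. \<tau> u = \<tau> v"
  show "A \<subseteq> mono_edges E \<tau>" by (rule mono_of_const[OF assms c])
next
  assume m: "A \<subseteq> mono_edges E \<tau>"
  show "\<forall>(u, v)\<in>comp_rel V A. \<tau> u = \<tau> v" using const_of_mono[OF m] by blast
qed

lemma agree_mono:
  assumes eg: "Egood V E" and A: "A \<subseteq> mono_edges E \<sigma>" and ag: "agree V A \<sigma> \<tau>"
  shows "A \<subseteq> mono_edges E \<tau>"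
proof
  fix e assume e: "e \<in> A"
  hence eE: "e \<in> E" and ex: "\<exists>a b. e = {a, b} \<and> \<sigma> a = \<sigma> b" using A unfolding mono_edges_def by auto
  have "\<exists>u v. e = {u, v} \<and> u \<in> V \<and> v \<in> V" using eg eE unfolding Egood_def by (rule bspec)
  then obtain u v where uv: "e = {u, v}" "u \<in> V" "v \<in> V" by (elim exE conjE)
  have su: "\<sigma> u = \<sigma> v" using ex uv by (auto simp: doubleton_eq_iff)
  have "\<not> isolated V A u" "\<not> isolated V A v" using e uv unfolding isolated_def by auto
  hence "\<tau> u = \<tau> v" using ag uv su unfolding agree_def by auto
  thus "e \<in> mono_edges E \<tau>" using eE uv unfolding mono_edges_def by blast
qed

lemma w_perc:
  assumes fin: "finite E" and A: "A \<subseteq> mono_edges E \<sigma>"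
  shows "wt p E \<sigma> * perc_prob p (mono_edges E \<sigma>) A = mu p E A"
proof -
  have M: "mono_edges E \<sigma> \<subseteq> E" by (rule mono_sub)
  have finM: "finite (mono_edges E \<sigma>)" using M fin by (rule finite_subset)
  have c1: "card A \<le> card (mono_edges E \<sigma>)" using A finM by (rule card_mono[rotated])
  have c2: "card (mono_edges E \<sigma>) \<le> card E" using M fin by (rule card_mono[rotated])
  have e: "card E - card (mono_edges E \<sigma>) + (card (mono_edges E \<sigma>) - card A) = card E - card A"
    using c1 c2 by simp
  show ?thesis unfolding wt_def perc_prob_def mu_def
    by (simp add: e power_add[symmetric] algebra_simps)
qed

lemma sum_filter_if:
  assumes "finite S"
  shows "(\<Sum>x\<in>{x\<in>S. P x}. if Q x then (h x::real) else 0) = (\<Sum>x\<in>S. if P x \<and> Q x then h x else 0)"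
  by (subst sum.inter_filter[OF assms]) (auto intro!: sum.cong)

lemma SW_sym:
  assumes fin: "finite E" and eg: "Egood V E"
  shows "wt p E \<sigma> * SW_kernel q p V E \<sigma> \<tau> =
    (\<Sum>A\<in>Pow E. if A \<subseteq> mono_edges E \<sigma> \<and> A \<subseteq> mono_edges E \<tau> \<and> \<tau> \<in> configs q V
       then mu p E A / real q ^ card (V // comp_rel V A) else 0)"
proof -
  have "wt p E \<sigma> * SW_kernel q p V E \<sigma> \<tau> =
     (\<Sum>A\<in>Pow (mono_edges E \<sigma>). if A \<subseteq> mono_edges E \<tau> \<and> \<tau> \<in> configs q V
       then mu p E A / real q ^ card (V // comp_rel V A) else 0)"
    unfolding SW_kernel_def sum_distrib_left
  proof (intro sum.cong refl)
    fix A assume A: "A \<in> Pow (mono_edges E \<sigma>)"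
    hence AE: "A \<subseteq> E" using mono_sub by blast
    show "wt p E \<sigma> * (perc_prob p (mono_edges E \<sigma>) A *
        (if \<tau> \<in> configs q V \<and> (\<forall>(u, v)\<in>comp_rel V A. \<tau> u = \<tau> v) then 1 / real q ^ card (V // comp_rel V A) else 0)) =
      (if A \<subseteq> mono_edges E \<tau> \<and> \<tau> \<in> configs q V then mu p E A / real q ^ card (V // comp_rel V A) else 0)"
    proof -
      have wp: "wt p E \<sigma> * perc_prob p (mono_edges E \<sigma>) A = mu p E A" using w_perc[OF fin, of A \<sigma> p] A by simp
      show ?thesis unfolding const_iff[OF eg AE, of \<tau>] mult.assoc[symmetric] wp by simp
    qed
  qed
  also have "Pow (mono_edges E \<sigma>) = {A\<in>Pow E. A \<subseteq> mono_edges E \<sigma>}" using mono_sub by blast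
  also have "(\<Sum>A\<in>{A\<in>Pow E. A \<subseteq> mono_edges E \<sigma>}. if A \<subseteq> mono_edges E \<tau> \<and> \<tau> \<in> configs q V
       then mu p E A / real q ^ card (V // comp_rel V A) else 0) =
     (\<Sum>A\<in>Pow E. if A \<subseteq> mono_edges E \<sigma> \<and> A \<subseteq> mono_edges E \<tau> \<and> \<tau> \<in> configs q V
       then mu p E A / real q ^ card (V // comp_rel V A) else 0)"
    using fin by (intro sum_filter_if) simp
  finally show ?thesis .
qed

lemma ISW_sym:
  assumes fin: "finite E"
  shows "wt p E \<sigma> * ISW_kernel q p V E \<sigma> \<tau> =
    (\<Sum>A\<in>Pow E. if A \<subseteq> mono_edges E \<sigma> \<and> \<tau> \<in> configs q V \<and> agree V A \<sigma> \<tau>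
       then mu p E A / real q ^ card {v \<in> V. isolated V A v} else 0)"
proof -
  have "wt p E \<sigma> * ISW_kernel q p V E \<sigma> \<tau> =
     (\<Sum>A\<in>Pow (mono_edges E \<sigma>). if \<tau> \<in> configs q V \<and> agree V A \<sigma> \<tau>
       then mu p E A / real q ^ card {v \<in> V. isolated V A v} else 0)"
    unfolding ISW_kernel_def sum_distrib_left
  proof (intro sum.cong refl)
    fix A assume A: "A \<in> Pow (mono_edges E \<sigma>)"
    show "wt p E \<sigma> * (perc_prob p (mono_edges E \<sigma>) A *
        (if \<tau> \<in> configs q V \<and> (\<forall>v\<in>V. \<not> isolated V A v \<longrightarrow> \<tau> v = \<sigma> v) then 1 / real q ^ card {v \<in> V. isolated V A v} else 0)) =
      (if \<tau> \<in> configs q V \<and> agree V A \<sigma> \<tau> then mu p E A / real q ^ card {v \<in> V. isolated V A v} else 0)"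
    proof -
      have wp: "wt p E \<sigma> * perc_prob p (mono_edges E \<sigma>) A = mu p E A" using w_perc[OF fin, of A \<sigma> p] A by simp
      show ?thesis unfolding agree_def[symmetric] mult.assoc[symmetric] wp by simp
    qed
  qed
  also have "Pow (mono_edges E \<sigma>) = {A\<in>Pow E. A \<subseteq> mono_edges E \<sigma>}" using mono_sub by blast
  also have "(\<Sum>A\<in>{A\<in>Pow E. A \<subseteq> mono_edges E \<sigma>}. if \<tau> \<in> configs q V \<and> agree V A \<sigma> \<tau>
       then mu p E A / real q ^ card {v \<in> V. isolated V A v} else 0) =
     (\<Sum>A\<in>Pow E. if A \<subseteq> mono_edges E \<sigma> \<and> \<tau> \<in> configs q V \<and> agree V A \<sigma> \<tau>
       then mu p E A / real q ^ card {v \<in> V. isolated V A v} else 0)"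
    using fin by (intro sum_filter_if) simp
  finally show ?thesis .
qed



lemma edge_rel_conv: "(edge_rel A)\<inverse> = edge_rel A"
  unfolding edge_rel_def by (auto simp: insert_commute)

lemma edge_rel_star_sym: "(x, y) \<in> (edge_rel A)\<^sup>* \<Longrightarrow> (y, x) \<in> (edge_rel A)\<^sup>*"
  using rtrancl_converseI[of x y "edge_rel A"] by (simp add: edge_rel_conv)

lemma configs_finite:
  assumes "finite V"
  shows "finite (configs q V)"
proof -
  have "configs q V \<subseteq> (\<lambda>g v. if v \<in> V then g v else 0) ` (PiE V (\<lambda>_. {1..q}))"
  proof
    fix \<sigma> assume s: "\<sigma> \<in> configs q V"
    have "\<sigma> = (\<lambda>v. if v \<in> V then restrict \<sigma> V v else 0)"
      using s unfolding configs_def by (auto intro!: ext)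
    moreover have "restrict \<sigma> V \<in> PiE V (\<lambda>_. {1..q})" using s unfolding configs_def by auto
    ultimately show "\<sigma> \<in> (\<lambda>g v. if v \<in> V then g v else 0) ` (PiE V (\<lambda>_. {1..q}))" by blast
  qed
  moreover have "finite (PiE V (\<lambda>_. {1..q}))" using assms by (intro finite_PiE) auto
  ultimately show ?thesis by (rule finite_subset[OF _ finite_imageI])
qed

lemma class_card:
  assumes fin: "finite V" and t: "\<tau> \<in> configs q V"
  shows "card {\<sigma> \<in> configs q V. agree V A \<sigma> \<tau>} = q ^ card {v \<in> V. isolated V A v}"
proof -
  define I where "I = {v \<in> V. isolated V A v}"
  have finI: "finite I" using fin unfolding I_def by simp
  have "bij_betw (\<lambda>\<sigma>. restrict \<sigma> I) {\<sigma> \<in> configs q V. agree V A \<sigma> \<tau>} (PiE I (\<lambda>_. {1..q}))"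
  proof (rule bij_betw_byWitness[where f' = "\<lambda>g v. if v \<in> I then g v else \<tau> v"])
    show "\<forall>\<sigma>\<in>{\<sigma> \<in> configs q V. agree V A \<sigma> \<tau>}. (\<lambda>v. if v \<in> I then restrict \<sigma> I v else \<tau> v) = \<sigma>"
    proof
      fix \<sigma> assume s: "\<sigma> \<in> {\<sigma> \<in> configs q V. agree V A \<sigma> \<tau>}"
      show "(\<lambda>v. if v \<in> I then restrict \<sigma> I v else \<tau> v) = \<sigma>"
      proof (rule ext)
        fix v show "(if v \<in> I then restrict \<sigma> I v else \<tau> v) = \<sigma> v"
          using s t unfolding configs_def agree_def I_def by (cases "v \<in> V") auto
      qed
    qed
    show "\<forall>g\<in>PiE I (\<lambda>_. {1..q}). restrict (\<lambda>v. if v \<in> I then g v else \<tau> v) I = g"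
      by (auto intro!: ext simp: PiE_def extensional_def)
    show "(\<lambda>\<sigma>. restrict \<sigma> I) ` {\<sigma> \<in> configs q V. agree V A \<sigma> \<tau>} \<subseteq> PiE I (\<lambda>_. {1..q})"
    proof (rule image_subsetI)
      fix \<sigma> assume s: "\<sigma> \<in> {\<sigma> \<in> configs q V. agree V A \<sigma> \<tau>}"
      show "restrict \<sigma> I \<in> PiE I (\<lambda>_. {1..q})"
        by (rule restrict_PiE_iff[THEN iffD2]) (use s in \<open>auto simp: configs_def I_def\<close>)
    qed
    show "(\<lambda>g v. if v \<in> I then g v else \<tau> v) ` PiE I (\<lambda>_. {1..q}) \<subseteq> {\<sigma> \<in> configs q V. agree V A \<sigma> \<tau>}"
      using t unfolding configs_def agree_def I_def by (auto simp: PiE_def Pi_def)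
  qed
  hence "card {\<sigma> \<in> configs q V. agree V A \<sigma> \<tau>} = card (PiE I (\<lambda>_. {1..q}))"
    by (rule bij_betw_same_card)
  also have "\<dots> = q ^ card I" using finI by (simp add: card_PiE)
  finally show ?thesis unfolding I_def .
qed

lemma U_card:
  assumes fin: "finite V"
  shows "card {\<sigma> \<in> configs q V. A \<subseteq> mono_edges E \<sigma>} \<le> q ^ card (V // comp_rel V A)"
proof -
  define R where "R = comp_rel V A"
  define U where "U = {\<sigma> \<in> configs q V. A \<subseteq> mono_edges E \<sigma>}"
  define h where "h = (\<lambda>\<sigma>::'a \<Rightarrow> nat. restrict (\<lambda>C. \<sigma> (SOME v. v \<in> C)) (V // R))"
  have RV: "R \<subseteq> V \<times> V" unfolding R_def comp_rel_def by auto
  have finQ: "finite (V // R)" using fin RV by (rule finite_quotient)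
  have rep: "(SOME v. v \<in> C) \<in> C" "(x, SOME v. v \<in> C) \<in> R"
    if "C \<in> V // R" "x \<in> C" for C x
  proof -
    from that(1) obtain y where y: "y \<in> V" "C = R `` {y}" by (rule quotientE)
    show "(SOME v. v \<in> C) \<in> C" using that(2) by (rule someI)
    hence "(y, SOME v. v \<in> C) \<in> R" using y by simp
    moreover have "(y, x) \<in> R" using that(2) y by simp
    ultimately have ys: "(y, SOME v. v \<in> C) \<in> (edge_rel A)\<^sup>*" "(SOME v. v \<in> C) \<in> V"
      and yx: "(y, x) \<in> (edge_rel A)\<^sup>*" "x \<in> V"
      unfolding R_def comp_rel_def by auto
    have "(x, SOME v. v \<in> C) \<in> (edge_rel A)\<^sup>*"
      by (rule rtrancl_trans[OF edge_rel_star_sym[OF yx(1)] ys(1)])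
    thus "(x, SOME v. v \<in> C) \<in> R" unfolding R_def comp_rel_def using ys(2) yx(2) by simp
  qed
  have selfC: "x \<in> R `` {x}" if "x \<in> V" for x using that unfolding R_def comp_rel_def by auto
  have "inj_on h U"
  proof (rule inj_onI)
    fix \<sigma> \<sigma>' assume s: "\<sigma> \<in> U" and s': "\<sigma>' \<in> U" and hh: "h \<sigma> = h \<sigma>'"
    show "\<sigma> = \<sigma>'"
    proof (rule ext)
      fix v
      show "\<sigma> v = \<sigma>' v"
      proof (cases "v \<in> V")
        case False thus ?thesis using s s' unfolding U_def configs_def by auto
      next
        case True
        define C where "C = R `` {v}"
        have C: "C \<in> V // R" unfolding C_def using True by (rule quotientI)
        have vC: "v \<in> C" unfolding C_def using selfC[OF True] .
        have r: "(v, SOME v. v \<in> C) \<in> R" by (rule rep(2)[OF C vC])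
        have sA: "A \<subseteq> mono_edges E \<sigma>" and sA': "A \<subseteq> mono_edges E \<sigma>'" using s s' unfolding U_def by auto
        have r': "(v, SOME v. v \<in> C) \<in> comp_rel V A" using r unfolding R_def .
        have "\<sigma> v = \<sigma> (SOME v. v \<in> C)" by (rule const_of_mono[OF sA r'])
        also have "\<dots> = h \<sigma> C" using C unfolding h_def by simp
        also have "\<dots> = h \<sigma>' C" using hh by simp
        also have "\<dots> = \<sigma>' (SOME v. v \<in> C)" using C unfolding h_def by simp
        also have "\<dots> = \<sigma>' v" using const_of_mono[OF sA' r'] by simp
        finally show ?thesis .
      qed
    qed
  qed
  moreover have "h ` U \<subseteq> PiE (V // R) (\<lambda>_. {1..q})"
  proof
    fix g assume "g \<in> h ` U"
    then obtain \<sigma> where s: "\<sigma> \<in> U" and g: "g = h \<sigma>" by blast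
    have "\<sigma> (SOME v. v \<in> C) \<in> {1..q}" if C: "C \<in> V // R" for C
    proof -
      from C obtain y where y: "y \<in> V" "C = R `` {y}" by (rule quotientE)
      have "y \<in> C" using y selfC by simp
      hence "(SOME v. v \<in> C) \<in> C" by (rule someI)
      hence "(SOME v. v \<in> C) \<in> V" using y RV by auto
      thus ?thesis using s unfolding U_def configs_def by auto
    qed
    thus "g \<in> PiE (V // R) (\<lambda>_. {1..q})" unfolding g h_def by auto
  qed
  moreover have "finite (PiE (V // R) (\<lambda>_. {1..q}))" using finQ by (intro finite_PiE) auto
  ultimately have "card U \<le> card (PiE (V // R) (\<lambda>_. {1..q}))" by (rule card_inj_on_le)
  also have "\<dots> = q ^ card (V // R)" using finQ by (simp add: card_PiE)
  finally show ?thesis unfolding U_def R_def .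
qed



lemma form_swap:
  fixes f :: "'s \<Rightarrow> real" and k :: "'a \<Rightarrow> real"
  assumes "finite \<Omega>" "finite P"
  shows "(\<Sum>s\<in>\<Omega>. \<Sum>t\<in>\<Omega>. f s * (\<Sum>A\<in>P. if C A s t then k A else 0) * f t)
       = (\<Sum>A\<in>P. k A * (\<Sum>s\<in>\<Omega>. \<Sum>t\<in>\<Omega>. if C A s t then f s * f t else 0))"
proof -
  have "(\<Sum>s\<in>\<Omega>. \<Sum>t\<in>\<Omega>. f s * (\<Sum>A\<in>P. if C A s t then k A else 0) * f t)
      = (\<Sum>s\<in>\<Omega>. \<Sum>t\<in>\<Omega>. \<Sum>A\<in>P. if C A s t then k A * (f s * f t) else 0)"
    by (intro sum.cong refl) (simp add: sum_distrib_left sum_distrib_right if_distrib[of "\<lambda>x. _ * x"] if_distrib[of "\<lambda>x. x * _"] mult.commute mult.left_commute cong: if_cong)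
  also have "\<dots> = (\<Sum>s\<in>\<Omega>. \<Sum>A\<in>P. \<Sum>t\<in>\<Omega>. if C A s t then k A * (f s * f t) else 0)"
    by (intro sum.cong refl) (rule sum.swap)
  also have "\<dots> = (\<Sum>A\<in>P. \<Sum>s\<in>\<Omega>. \<Sum>t\<in>\<Omega>. if C A s t then k A * (f s * f t) else 0)"
    by (rule sum.swap)
  also have "\<dots> = (\<Sum>A\<in>P. k A * (\<Sum>s\<in>\<Omega>. \<Sum>t\<in>\<Omega>. if C A s t then f s * f t else 0))"
    by (intro sum.cong refl) (simp add: sum_distrib_left if_distrib[of "\<lambda>x. _ * x"] cong: if_cong)
  finally show ?thesis .
qed

lemma double_filter:
  fixes h :: "'s \<Rightarrow> 's \<Rightarrow> real"
  assumes fin: "finite \<Omega>" and U: "U \<subseteq> \<Omega>"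
  shows "(\<Sum>s\<in>\<Omega>. \<Sum>t\<in>\<Omega>. if s \<in> U \<and> t \<in> U then h s t else 0) = (\<Sum>s\<in>U. \<Sum>t\<in>U. h s t)"
proof -
  have UU: "{x\<in>\<Omega>. x \<in> U} = U" using U by blast
  have "(\<Sum>s\<in>\<Omega>. \<Sum>t\<in>\<Omega>. if s \<in> U \<and> t \<in> U then h s t else 0)
      = (\<Sum>s\<in>\<Omega>. if s \<in> U then (\<Sum>t\<in>\<Omega>. if t \<in> U then h s t else 0) else 0)"
    by (intro sum.cong refl) auto
  also have "\<dots> = (\<Sum>s\<in>U. \<Sum>t\<in>\<Omega>. if t \<in> U then h s t else 0)"
    using sum.inter_filter[OF fin, of "\<lambda>s. (\<Sum>t\<in>\<Omega>. if t \<in> U then h s t else 0)" "\<lambda>s. s \<in> U"] UU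
    by simp
  also have "\<dots> = (\<Sum>s\<in>U. \<Sum>t\<in>U. h s t)"
  proof (rule sum.cong[OF refl])
    fix s assume "s \<in> U"
    show "(\<Sum>t\<in>\<Omega>. if t \<in> U then h s t else 0) = (\<Sum>t\<in>U. h s t)"
      using sum.inter_filter[OF fin, of "\<lambda>t. h s t" "\<lambda>t. t \<in> U"] UU
      by simp
  qed
  finally show ?thesis .
qed

lemma agree_sym: "agree V A s t \<Longrightarrow> agree V A t s" unfolding agree_def by auto
lemma agree_trans: "agree V A s t \<Longrightarrow> agree V A t r \<Longrightarrow> agree V A s r" unfolding agree_def by auto

lemma main_general:
  fixes V :: "'v set" and E :: "'v set set"
  assumes finV: "finite V" and Vne: "V \<noteq> {}" and eg: "Egood V E" and q: "q \<ge> 2"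
    and p0: "0 \<le> p" and p1: "p < 1"
  shows "spectral_gap (trans_mat (configs q V) (ISW_kernel q p V E))
       \<le> spectral_gap (trans_mat (configs q V) (SW_kernel q p V E))"
proof -
  define \<Omega> where "\<Omega> = configs q V"
  have finE: "finite E"
  proof (rule finite_subset)
    show "E \<subseteq> (\<lambda>(u, v). {u, v}) ` (V \<times> V)" using eg unfolding Egood_def by auto
    show "finite ((\<lambda>(u, v). {u, v}) ` (V \<times> V))" using finV by simp
  qed
  have finO: "finite \<Omega>" unfolding \<Omega>_def by (rule configs_finite[OF finV])
  have finP: "finite (Pow E)" using finE by simp
  have card2: "card \<Omega> \<ge> 2"
  proof -
    define s1 where "s1 = (\<lambda>v. if v \<in> V then 1 else (0::nat))"
    define s2 where "s2 = (\<lambda>v. if v \<in> V then 2 else (0::nat))"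
    have "s1 \<in> \<Omega>" "s2 \<in> \<Omega>" using q unfolding \<Omega>_def configs_def s1_def s2_def by auto
    moreover have "s1 \<noteq> s2"
    proof
      assume e: "s1 = s2"
      obtain v0 where v0: "v0 \<in> V" using Vne by blast
      have "s1 v0 = s2 v0" using e by simp
      thus False using v0 unfolding s1_def s2_def by simp
    qed
    ultimately have "{s1, s2} \<subseteq> \<Omega>" "card {s1, s2} = 2" by auto
    thus ?thesis using card_mono[OF finO] by metis
  qed
  have wpos: "\<forall>s\<in>\<Omega>. wt p E s > 0" using p1 unfolding wt_def by simp
  define U where "U = (\<lambda>A. {s \<in> \<Omega>. A \<subseteq> mono_edges E s})"
  have UO: "U A \<subseteq> \<Omega>" for A unfolding U_def by auto
  have revP: "\<forall>s\<in>\<Omega>. \<forall>t\<in>\<Omega>. wt p E s * SW_kernel q p V E s t = wt p E t * SW_kernel q p V E t s"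
    unfolding SW_sym[OF finE eg] \<Omega>_def by (auto intro!: sum.cong)
  have revQ: "\<forall>s\<in>\<Omega>. \<forall>t\<in>\<Omega>. wt p E s * ISW_kernel q p V E s t = wt p E t * ISW_kernel q p V E t s"
  proof (intro ballI)
    fix s t assume s: "s \<in> \<Omega>" and t: "t \<in> \<Omega>"
    have cond: "(A \<subseteq> mono_edges E s \<and> t \<in> configs q V \<and> agree V A s t) \<longleftrightarrow>
      (A \<subseteq> mono_edges E t \<and> s \<in> configs q V \<and> agree V A t s)" for A
      using s t agree_sym[of V A] agree_mono[OF eg] unfolding \<Omega>_def by blast
    show "wt p E s * ISW_kernel q p V E s t = wt p E t * ISW_kernel q p V E t s"
      unfolding ISW_sym[OF finE] by (simp only: cond)
  qed
  define cS where "cS = (\<lambda>A. mu p E A / real q ^ card (V // comp_rel V A))"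
  define cI where "cI = (\<lambda>A. mu p E A / real q ^ card {v \<in> V. isolated V A v})"
  have FS: "(\<Sum>s\<in>\<Omega>. \<Sum>t\<in>\<Omega>. f s * (wt p E s * SW_kernel q p V E s t) * f t)
      = (\<Sum>A\<in>Pow E. cS A * (\<Sum>s\<in>U A. \<Sum>t\<in>U A. f s * f t))" for f
  proof -
    have "(\<Sum>s\<in>\<Omega>. \<Sum>t\<in>\<Omega>. f s * (wt p E s * SW_kernel q p V E s t) * f t)
      = (\<Sum>s\<in>\<Omega>. \<Sum>t\<in>\<Omega>. f s * (\<Sum>A\<in>Pow E. if A \<subseteq> mono_edges E s \<and> A \<subseteq> mono_edges E t \<and> t \<in> \<Omega> then cS A else 0) * f t)"
      unfolding SW_sym[OF finE eg] cS_def \<Omega>_def ..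
    also have "\<dots> = (\<Sum>A\<in>Pow E. cS A * (\<Sum>s\<in>\<Omega>. \<Sum>t\<in>\<Omega>. if A \<subseteq> mono_edges E s \<and> A \<subseteq> mono_edges E t \<and> t \<in> \<Omega> then f s * f t else 0))"
      by (rule form_swap[OF finO finP])
    also have "\<dots> = (\<Sum>A\<in>Pow E. cS A * (\<Sum>s\<in>U A. \<Sum>t\<in>U A. f s * f t))"
    proof (rule sum.cong[OF refl])
      fix A
      have "(\<Sum>s\<in>\<Omega>. \<Sum>t\<in>\<Omega>. if A \<subseteq> mono_edges E s \<and> A \<subseteq> mono_edges E t \<and> t \<in> \<Omega> then f s * f t else 0)
          = (\<Sum>s\<in>\<Omega>. \<Sum>t\<in>\<Omega>. if s \<in> U A \<and> t \<in> U A then f s * f t else 0)"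
        unfolding U_def by (intro sum.cong refl) auto
      also have "\<dots> = (\<Sum>s\<in>U A. \<Sum>t\<in>U A. f s * f t)" by (rule double_filter[OF finO UO])
      finally show "cS A * (\<Sum>s\<in>\<Omega>. \<Sum>t\<in>\<Omega>. if A \<subseteq> mono_edges E s \<and> A \<subseteq> mono_edges E t \<and> t \<in> \<Omega> then f s * f t else 0)
          = cS A * (\<Sum>s\<in>U A. \<Sum>t\<in>U A. f s * f t)" by simp
    qed
    finally show ?thesis .
  qed
  have FI: "(\<Sum>s\<in>\<Omega>. \<Sum>t\<in>\<Omega>. f s * (wt p E s * ISW_kernel q p V E s t) * f t)
      = (\<Sum>A\<in>Pow E. cI A * (\<Sum>s\<in>U A. \<Sum>t\<in>U A. if agree V A s t then f s * f t else 0))" for f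
  proof -
    have "(\<Sum>s\<in>\<Omega>. \<Sum>t\<in>\<Omega>. f s * (wt p E s * ISW_kernel q p V E s t) * f t)
      = (\<Sum>s\<in>\<Omega>. \<Sum>t\<in>\<Omega>. f s * (\<Sum>A\<in>Pow E. if A \<subseteq> mono_edges E s \<and> t \<in> \<Omega> \<and> agree V A s t then cI A else 0) * f t)"
      unfolding ISW_sym[OF finE] cI_def \<Omega>_def ..
    also have "\<dots> = (\<Sum>A\<in>Pow E. cI A * (\<Sum>s\<in>\<Omega>. \<Sum>t\<in>\<Omega>. if A \<subseteq> mono_edges E s \<and> t \<in> \<Omega> \<and> agree V A s t then f s * f t else 0))"
      by (rule form_swap[OF finO finP])
    also have "\<dots> = (\<Sum>A\<in>Pow E. cI A * (\<Sum>s\<in>U A. \<Sum>t\<in>U A. if agree V A s t then f s * f t else 0))"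
    proof (rule sum.cong[OF refl])
      fix A
      have "(\<Sum>s\<in>\<Omega>. \<Sum>t\<in>\<Omega>. if A \<subseteq> mono_edges E s \<and> t \<in> \<Omega> \<and> agree V A s t then f s * f t else 0)
          = (\<Sum>s\<in>\<Omega>. \<Sum>t\<in>\<Omega>. if s \<in> U A \<and> t \<in> U A then (if agree V A s t then f s * f t else 0) else 0)"
        unfolding U_def by (intro sum.cong refl) (auto dest: agree_mono[OF eg])
      also have "\<dots> = (\<Sum>s\<in>U A. \<Sum>t\<in>U A. if agree V A s t then f s * f t else 0)"
        by (rule double_filter[OF finO UO])
      finally show "cI A * (\<Sum>s\<in>\<Omega>. \<Sum>t\<in>\<Omega>. if A \<subseteq> mono_edges E s \<and> t \<in> \<Omega> \<and> agree V A s t then f s * f t else 0)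
          = cI A * (\<Sum>s\<in>U A. \<Sum>t\<in>U A. if agree V A s t then f s * f t else 0)" by simp
    qed
    finally show ?thesis .
  qed
  have mu0: "mu p E A \<ge> 0" for A using p0 p1 unfolding mu_def by simp
  have qpos: "real q > 0" using q by simp
  have perA: "cS A * (\<Sum>s\<in>U A. \<Sum>t\<in>U A. f s * f t) \<le> cI A * (\<Sum>s\<in>U A. \<Sum>t\<in>U A. if agree V A s t then f s * f t else 0)
      \<and> 0 \<le> cS A * (\<Sum>s\<in>U A. \<Sum>t\<in>U A. f s * f t)" for A f
  proof -
    have finU: "finite (U A)" using UO[of A] finO by (rule finite_subset)
    have sq: "(\<Sum>s\<in>U A. \<Sum>t\<in>U A. f s * f t) = (\<Sum>s\<in>U A. f s)^2"
      by (simp add: power2_eq_square sum_product)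
    have cls: "card {s\<in>U A. agree V A s t} = q ^ card {v \<in> V. isolated V A v}" if t: "t \<in> U A" for t
    proof -
      have tA: "A \<subseteq> mono_edges E t" using t unfolding U_def by simp
      have "{s\<in>U A. agree V A s t} = {s\<in>\<Omega>. agree V A s t}"
      proof (intro equalityI subsetI)
        fix s assume "s \<in> {s\<in>U A. agree V A s t}" thus "s \<in> {s\<in>\<Omega>. agree V A s t}" unfolding U_def by simp
      next
        fix s assume s: "s \<in> {s\<in>\<Omega>. agree V A s t}"
        hence "A \<subseteq> mono_edges E s" using agree_mono[OF eg tA agree_sym] by simp
        thus "s \<in> {s\<in>U A. agree V A s t}" using s unfolding U_def by simp
      qed
      thus ?thesis using class_card[OF finV, of t q A] t unfolding U_def \<Omega>_def by simp
    qed
    have K0: "card (U A) \<le> q ^ card (V // comp_rel V A)"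
      using U_card[OF finV, of q A E] unfolding U_def \<Omega>_def .
    have K: "real (card (U A)) \<le> real q ^ card (V // comp_rel V A)"
      unfolding of_nat_power[symmetric] of_nat_le_iff by (rule K0)
    have m: "q ^ card {v \<in> V. isolated V A v} > 0" using q by simp
    note cc = class_CS[OF finU m, where ag="agree V A" and f=f and K="real q ^ card (V // comp_rel V A)"]
    have c1: "(\<Sum>s\<in>U A. f s)^2 / real q ^ card (V // comp_rel V A)
        \<le> (\<Sum>s\<in>U A. \<Sum>t\<in>U A. if agree V A s t then f s * f t else 0) / real q ^ card {v \<in> V. isolated V A v}"
    proof -
      have sym': "\<And>s t. s \<in> U A \<Longrightarrow> t \<in> U A \<Longrightarrow> agree V A s t \<Longrightarrow> agree V A t s"
        by (rule agree_sym)
      have trans': "\<And>s t r. s \<in> U A \<Longrightarrow> t \<in> U A \<Longrightarrow> r \<in> U A \<Longrightarrow> agree V A s t \<Longrightarrow> agree V A t r \<Longrightarrow> agree V A s r"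
        by (rule agree_trans)
      show ?thesis using cc(1)[OF sym' trans' cls K] by (simp only: of_nat_power)
    qed
    have "cS A * (\<Sum>s\<in>U A. \<Sum>t\<in>U A. f s * f t) = mu p E A * ((\<Sum>s\<in>U A. f s)^2 / real q ^ card (V // comp_rel V A))"
      unfolding sq cS_def by simp
    also have "\<dots> \<le> mu p E A * ((\<Sum>s\<in>U A. \<Sum>t\<in>U A. if agree V A s t then f s * f t else 0) / real q ^ card {v \<in> V. isolated V A v})"
      using c1 mu0 by (rule mult_left_mono)
    also have "\<dots> = cI A * (\<Sum>s\<in>U A. \<Sum>t\<in>U A. if agree V A s t then f s * f t else 0)"
      unfolding cI_def by simp
    finally show ?thesis using mu0 qpos unfolding sq cS_def by simp
  qed
  have "spectral_gap (trans_mat \<Omega> (ISW_kernel q p V E)) \<le> spectral_gap (trans_mat \<Omega> (SW_kernel q p V E))"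
  proof (rule trans_gap_compare[OF finO card2 wpos revP revQ])
    fix f
    show "0 \<le> (\<Sum>s\<in>\<Omega>. \<Sum>t\<in>\<Omega>. f s * (wt p E s * SW_kernel q p V E s t) * f t) \<and>
      (\<Sum>s\<in>\<Omega>. \<Sum>t\<in>\<Omega>. f s * (wt p E s * SW_kernel q p V E s t) * f t)
      \<le> (\<Sum>s\<in>\<Omega>. \<Sum>t\<in>\<Omega>. f s * (wt p E s * ISW_kernel q p V E s t) * f t)"
      unfolding FS FI using perA by (auto intro!: sum_nonneg sum_mono)
  qed
  thus ?thesis unfolding \<Omega>_def .
qed



theorem mainTheorem8:
  fixes q d L :: nat and a :: "nat \<Rightarrow> int" and \<beta> :: real
  assumes "q \<ge> 2" and "\<beta> > 0" and "d \<ge> 1" and "L \<ge> 1"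
  defines "V \<equiv> cube d a L"
  defines "E \<equiv> induced_edges d V"
  defines "p \<equiv> 1 - exp (- \<beta>)"
  shows "spectral_gap (trans_mat (configs q V) (SW_kernel q p V E))
         \<ge> spectral_gap (trans_mat (configs q V) (ISW_kernel q p V E))"
proof -
  define B where "B = (\<Union>i<d. {a i..<a i + int L})"
  have finB: "finite B" unfolding B_def by simp
  have "V \<subseteq> {xs. set xs \<subseteq> B \<and> length xs = d}"
  proof
    fix x assume x: "x \<in> V"
    hence len: "length x = d" and bd: "\<forall>i<d. a i \<le> x ! i \<and> x ! i < a i + int L"
      unfolding V_def cube_def by auto
    have "set x \<subseteq> B"
    proof
      fix y assume "y \<in> set x"
      then obtain i where i: "i < length x" "x ! i = y" by (auto simp: in_set_conv_nth)
      thus "y \<in> B" using bd len unfolding B_def by force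
    qed
    thus "x \<in> {xs. set xs \<subseteq> B \<and> length xs = d}" using len by simp
  qed
  hence finV: "finite V" using finite_lists_length_eq[OF finB] by (rule finite_subset)
  have "map a [0..<d] \<in> V" using assms(4) unfolding V_def cube_def by auto
  hence Vne: "V \<noteq> {}" by blast
  have eg: "Egood V E" unfolding Egood_def E_def induced_edges_def by blast
  have p0: "0 \<le> p" unfolding p_def using assms(2) by simp
  have p1: "p < 1" unfolding p_def by simp
  show ?thesis using main_general[OF finV Vne eg assms(1) p0 p1] by simp
qed


end
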